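(* Let $a>0$, $b>0$, $c\ge 1$ and $d\ge 1$ be real numbers such that $a-ad+c>0$ and $b-bc+d>0$. Then $$\frac{d(a+1)(c+d-1)}{a+c+d}+\frac{c(a+c-ad)}{a+c}+a+\frac{b(ab+ad+bc)}{b+d}+\frac{(1+b)(b+d-bc)}{b+c+d}- \frac{3\sqrt{5}-5}{2}(a+b+c+d+ab)\ge 0,$$ with equality if and only if $a=b=(\sqrt{5}-1)/2$ and $c=d=1$. *)

theory Defs
  imports Complex_Main
begin

end

theory Submission
  imports Defs
begin

definition Nf :: "real \<Rightarrow> real \<Rightarrow> real \<Rightarrow> real \<Rightarrow> real \<Rightarrow> real" where
  "Nf a2 b2 c d s = (32*(7 - 3*s)*(2*a2 + 2*b2 + 4*c + 4*d + a2*b2) - 256)*(a2 + 2*c + 2*d)*(b2 + 2*c + 2*d)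
    + (32*(9*(s - 1) - a2 + 2*c - 2*d)*(a2 + 2*c - a2*d) - (9*(s - 1) - a2 + 2*c - 2*d)^2*(a2 + 2*c))*(b2 + 2*c + 2*d)
    + (32*(9*(s - 1) - b2 + 2*d - 2*c)*(b2 + 2*d - b2*c) - (9*(s - 1) - b2 + 2*d - 2*c)^2*(b2 + 2*d))*(a2 + 2*c + 2*d)"

lemma sum4_zero:
  fixes r k1 k2 k3 k4 :: real
  assumes "0 \<le> r" "0 \<le> k1" "0 \<le> k2" "0 \<le> k3" "0 \<le> k4" "r + k1 + k2 + k3 + k4 = 0"
  shows "k1 = 0 \<and> k2 = 0 \<and> k3 = 0 \<and> k4 = 0"
  using assms by linarith

lemma cert_id:
  fixes p q x y s :: real
  shows "140737488355328 * Nf (p + s - 1) (q + s - 1) (x + 1) (y + 1) s =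
    (754816 + 0*s) * (- 60616*y + 20906*y^2 - 60616*x - 115010*x*y + 20906*x^2 + 56059*q + 55035*q*y + 88034*q*x + 56059*p + 88034*p*y + 55035*p*x + 32768*p*q)^2 +
    (120056 + 0*s) * (- 10296*y + 39338*y^2 - 51726*x - 66730*x*y - 42846*x^2 - 299*q + 14240*q*y - 14800*q*x + 47703*p + 118433*p*y + 65536*p*x)^2 +
    (862080 + 0*s) * (35970*y + 61486*y^2 - 33854*x + 2578*x*y - 61110*x^2 - 20809*q - 5645*q*y - 66160*q*x + 19786*p + 65536*p*y)^2 +
    (369440 + 0*s) * (- 25394*y - 20032*y^2 - 5656*x - 31996*x*y + 19476*x^2 + 25144*q + 26233*q*y + 65536*q*x + 1380*p)^2 +
    (48792 + 0*s) * (9940*y + 27828*y^2 - 32054*x - 27612*x*y - 32326*x^2 + 9657*q + 65536*q*y - 309*p)^2 +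
    (253576 + 0*s) * (71760*y + 101458*y^2 + 74932*x + 183118*x*y + 131072*x^2 - 13012*q - 12801*p)^2 +
    (541216 + 0*s) * (18930*y + 38769*y^2 + 14777*x + 65536*x*y - 5003*q - 5279*p)^2 +
    (54288 + 0*s) * (34726*y + 131072*y^2 + 20686*x + 2005*q + 1071*p)^2 +
    (93688 + 0*s) * x * (- 23072*y + 7976*x - 687*q + 65536*p)^2 +
    (2021632 + 0*s) * x * (- 5781*y + 1884*x + 16384*q)^2 +
    (1748736 + 0*s) * x * (5319*y + 32768*x)^2 +
    (1586595278880768 + 0*s) * x * (y)^2 +
    (126360 + 0*s) * y * (7474*y - 22942*x - 509*q + 65536*p)^2 +
    (374720 + 0*s) * y * (4028*y - 11657*x + 32768*q)^2 +
    (380928 + 0*s) * y * (12209*y + 65536*x)^2 +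
    (1820928694550528 + 0*s) * y * (y)^2 +
    (11732 + 0*s) * (p + s - 1) * (38626*y - 1320*x + 19589*q + 65536*p)^2 +
    (764800 + 0*s) * (p + s - 1) * (- 2392*y - 3911*x + 16384*q)^2 +
    (183168 + 0*s) * (p + s - 1) * (- 13785*y + 65536*x)^2 +
    (747049431597056 + 0*s) * (p + s - 1) * (y)^2 +
    (48852 + 0*s) * (q + s - 1) * (- 15402*y - 6590*x + 4705*q + 65536*p)^2 +
    (45920 + 0*s) * (q + s - 1) * (1678*y + 20743*x + 32768*q)^2 +
    (728192 + 0*s) * (q + s - 1) * (- 6935*y + 32768*x)^2 +
    (751653636538368 + 0*s) * (q + s - 1) * (y)^2 +
    (258894 + 0*s) * (4*s + 4 - (s + 1)*(p + q) - p*q - 4*x - 4*y) * (- 89180*y - 70244*x + 29247*q + 65536*p)^2 +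
    (829328 + 0*s) * (4*s + 4 - (s + 1)*(p + q) - p*q - 4*x - 4*y) * (- 19008*y - 36107*x + 32768*q)^2 +
    (2775040 + 0*s) * (4*s + 4 - (s + 1)*(p + q) - p*q - 4*x - 4*y) * (1455*y + 8192*x)^2 +
    (180354266693632 + 0*s) * (4*s + 4 - (s + 1)*(p + q) - p*q - 4*x - 4*y) * (y)^2 +
    (25180 + 0*s) * (3*s + 3 - 2*x - 2*y) * (- 56532*y - 18910*x + 14679*q + 65536*p)^2 +
    (95664 + 0*s) * (3*s + 3 - 2*x - 2*y) * (- 3289*y - 27529*x + 32768*q)^2 +
    (10552320 + 0*s) * (3*s + 3 - 2*x - 2*y) * (- 3299*y + 8192*x)^2 +
    (593323962138624 + 0*s) * (3*s + 3 - 2*x - 2*y) * (y)^2 +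
    (9616 + 0*s) * (p + s - 1)*x * (254560*y - 589338*x - 186917*q + 65536*p)^2 +
    (1797632 + 0*s) * (p + s - 1)*x * (- 11505*y + 24381*x + 16384*q)^2 +
    (1398848 + 0*s) * (p + s - 1)*x * (- 1097*y + 32768*x)^2 +
    (639915767365632 + 0*s) * (p + s - 1)*x * (y)^2 +
    (153856 + 0*s) * (p + s - 1)*y * (33749*y + 18665*x + 3991*q + 16384*p)^2 +
    (1367552 + 0*s) * (p + s - 1)*y * (28531*y - 11431*x + 16384*q)^2 +
    (144480 + 0*s) * (p + s - 1)*y * (- 6469*y + 65536*x)^2 +
    (1750147633512448 + 0*s) * (p + s - 1)*y * (y)^2 +
    (344176 + 0*s) * (q + s - 1)*x * (- 21694*y + 58521*x + 892*q + 32768*p)^2 +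
    (38208 + 0*s) * (q + s - 1)*x * (42899*y + 53598*x + 32768*q)^2 +
    (1635584 + 0*s) * (q + s - 1)*x * (- 1143*y + 32768*x)^2 +
    (618406571147264 + 0*s) * (q + s - 1)*x * (y)^2 +
    (762336 + 0*s) * (q + s - 1)*y * (71156*y - 31883*x - 4716*q + 32768*p)^2 +
    (22672 + 0*s) * (q + s - 1)*y * (- 155594*y + 61651*x + 32768*q)^2 +
    (38244352 + 0*s) * (q + s - 1)*y * (- 321*y + 4096*x)^2 +
    (1498015873368064 + 0*s) * (q + s - 1)*y * (y)^2 +
    (908696 + 0*s) * (p + s - 1)*(q + s - 1) * (21339*y + 9928*x + 24896*q + 32768*p)^2 +
    (24586752 + 0*s) * (p + s - 1)*(q + s - 1) * (- 1858*y + 4079*x + 4096*q)^2 +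
    (1112832 + 0*s) * (p + s - 1)*(q + s - 1) * (- 23533*y + 32768*x)^2 +
    (578583634378752 + 0*s) * (p + s - 1)*(q + s - 1) * (y)^2 +
    (1128528 + 0*s) * (3*s + 3 - 2*x - 2*y)*x * (- 31890*y + 25135*x - 3*q + 32768*p)^2 +
    (1636320 + 0*s) * (3*s + 3 - 2*x - 2*y)*x * (- 32429*y - 16172*x + 32768*q)^2 +
    (4915392 + 0*s) * (3*s + 3 - 2*x - 2*y)*x * (503*y + 32768*x)^2 +
    (677848918523904 + 0*s) * (3*s + 3 - 2*x - 2*y)*x * (y)^2 +
    (1644704 + 0*s) * (3*s + 3 - 2*x - 2*y)*y * (- 16091*y - 32262*x - 2*q + 32768*p)^2 +
    (1136928 + 0*s) * (3*s + 3 - 2*x - 2*y)*y * (24948*y - 31657*x + 32768*q)^2 +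
    (170528 + 0*s) * (3*s + 3 - 2*x - 2*y)*y * (7041*y + 65536*x)^2 +
    (5312908904890368 + 0*s) * (3*s + 3 - 2*x - 2*y)*y * (y)^2 +
    (2330624 + 0*s) * x*y * (32768 + 31612*y + 31612*x - 12659*q - 12659*p)^2 +
    (3292448 + 0*s) * x*y * (7204*y - 21436*x - 23183*q + 32768*p)^2 +
    (1644416 + 0*s) * x*y * (- 32715*y - 15941*x + 32768*q)^2 +
    (6139264 + 0*s) * x*y * (- 13041*y + 32768*x)^2 +
    (5547998234804224 + 0*s) * x*y * (y)^2 +
    (572982997024768 + 0*s) * x*y*(p + s - 1) +
    (572982997024768 + 0*s) * x*y*(q + s - 1) +
    (515361715781632 + 0*s) * x*y*(4*s + 4 - (s + 1)*(p + q) - p*q - 4*x - 4*y) +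
    (204062486167552 + 0*s) * x*x*(4*s + 4 - (s + 1)*(p + q) - p*q - 4*x - 4*y) +
    (204062486167552 + 0*s) * y*y*(4*s + 4 - (s + 1)*(p + q) - p*q - 4*x - 4*y) +
    (483922555174912 + 0*s) * x*y*(3*s + 3 - 2*x - 2*y) +
    (38626 + 0*s) * (p + s - 1)*(3*s + 3 - 2*x - 2*y) * (8882*y - 83818*x + 126349*q + 65536*p)^2 +
    (194656 + 0*s) * (p + s - 1)*(3*s + 3 - 2*x - 2*y) * (1834*y - 35095*x + 32768*q)^2 +
    (154296 + 0*s) * (p + s - 1)*(3*s + 3 - 2*x - 2*y) * (- 44333*y + 65536*x)^2 +
    (310921272492032 + 0*s) * (p + s - 1)*(3*s + 3 - 2*x - 2*y) * (y)^2 +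
    (768920 + 0*s) * (q + s - 1)*(3*s + 3 - 2*x - 2*y) * (- 25119*y + 2185*x + 12694*q + 32768*p)^2 +
    (39112 + 0*s) * (q + s - 1)*(3*s + 3 - 2*x - 2*y) * (25753*y + 905*x + 32768*q)^2 +
    (572000 + 0*s) * (q + s - 1)*(3*s + 3 - 2*x - 2*y) * (- 23917*y + 32768*x)^2 +
    (335488485425152 + 0*s) * (q + s - 1)*(3*s + 3 - 2*x - 2*y) * (y)^2 +
    (4586 + 0*s) * (3*s + 3 - 2*x - 2*y)*(3*s + 3 - 2*x - 2*y) * (- 164612*y + 75626*x + 14533*q + 65536*p)^2 +
    (69760 + 0*s) * (3*s + 3 - 2*x - 2*y)*(3*s + 3 - 2*x - 2*y) * (29482*y - 47691*x + 16384*q)^2 +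
    (89000 + 0*s) * (3*s + 3 - 2*x - 2*y)*(3*s + 3 - 2*x - 2*y) * (- 53933*y + 65536*x)^2 +
    (123385820479488 + 0*s) * (3*s + 3 - 2*x - 2*y)*(3*s + 3 - 2*x - 2*y) * (y)^2 +
    (4522497115794748 - 2020535360147684*s) * (p*q)^2 +
    (17930030572928 + 0*s) * (p*x)^2 +
    (17906639446792 + 0*s) * (p*y)^2 +
    (17898901413576 + 0*s) * (q*x)^2 +
    (17999515133112 + 0*s) * (q*y)^2 +
    (71908745143904 + 0*s) * (x^2)^2 +
    (72298507348352 + 0*s) * (x*y)^2 +
    (71996772182208 + 0*s) * (y^2)^2 +
    (-85279674805731912 + 38146310675628032*s) * (p)^2 +
    (-85279679204573404 + 38146334540690428*s) * (q)^2 +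
    (1283554698688168752 - 573988290291994928*s) * (x)^2 +
    (1283553127427497280 - 573990395136377344*s) * (y)^2 +
    (112905983891283456 - 50484980145389824*s) * x * (p)^2 +
    (115489947071023616 - 51640376578789584*s) * x * (q)^2 +
    (47879712952991264 - 21380405082800928*s) * x * (x)^2 +
    (22422017835429056 - 9995042257119808*s) * x * (y)^2 +
    (115489836573613936 - 51640503451516928*s) * y * (p)^2 +
    (112906071831482856 - 50485038992518056*s) * y * (q)^2 +
    (22421052165547776 - 9994754402358432*s) * y * (x)^2 +
    (47880574739063072 - 21380507950238912*s) * y * (y)^2 +
    (1121854047649792 - 497692220325888*s) * (p + s - 1) * (p)^2 +
    (-14241465453078858 + 6372904247727210*s) * (p + s - 1) * (q)^2 +
    (226732101234581016 - 101382108576002728*s) * (p + s - 1) * (x)^2 +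
    (362403729081867280 - 162056065783766864*s) * (p + s - 1) * (y)^2 +
    (-14241459460898816 + 6372946554126336*s) * (q + s - 1) * (p)^2 +
    (1121876653502476 - 497694423880224*s) * (q + s - 1) * (q)^2 +
    (362403374190310256 - 162055858607988768*s) * (q + s - 1) * (x)^2 +
    (226732406293108992 - 101381928319687360*s) * (q + s - 1) * (y)^2 +
    (4501125726208 + 0*s) * (4*s + 4 - (s + 1)*(p + q) - p*q - 4*x - 4*y) * (p)^2 +
    (4515622931378 + 0*s) * (4*s + 4 - (s + 1)*(p + q) - p*q - 4*x - 4*y) * (q)^2 +
    (-120826486482764704 + 54043195528445952*s) * (4*s + 4 - (s + 1)*(p + q) - p*q - 4*x - 4*y) * (x)^2 +
    (-120826296339933016 + 54043195528445952*s) * (4*s + 4 - (s + 1)*(p + q) - p*q - 4*x - 4*y) * (y)^2 +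
    (9019431321600 + 0*s) * (p + s - 1)*x * (p)^2 +
    (60431234154751044 - 27021597764222976*s) * (p + s - 1)*x * (q)^2 +
    (36521412013840 + 0*s) * (p + s - 1)*x * (x)^2 +
    (36278959651456 + 0*s) * (p + s - 1)*x * (y)^2 +
    (9019431321600 + 0*s) * (p + s - 1)*y * (p)^2 +
    (60431218655707508 - 27021597764222976*s) * (p + s - 1)*y * (q)^2 +
    (35590302611408 + 0*s) * (p + s - 1)*y * (x)^2 +
    (36058344066624 + 0*s) * (p + s - 1)*y * (y)^2 +
    (60431172468473856 - 27021597764222976*s) * (q + s - 1)*x * (p)^2 +
    (9021929811904 + 0*s) * (q + s - 1)*x * (q)^2 +
    (36028285949040 + 0*s) * (q + s - 1)*x * (x)^2 +
    (35965280015648 + 0*s) * (q + s - 1)*x * (y)^2 +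
    (60431139517497344 - 27021597764222976*s) * (q + s - 1)*y * (p)^2 +
    (9022578510016 + 0*s) * (q + s - 1)*y * (q)^2 +
    (36213750685392 + 0*s) * (q + s - 1)*y * (x)^2 +
    (36263448318336 + 0*s) * (q + s - 1)*y * (y)^2 +
    (9022056934144 + 0*s) * (3*s + 3 - 2*x - 2*y)*x * (p)^2 +
    (8947045352552 + 0*s) * (3*s + 3 - 2*x - 2*y)*x * (q)^2 +
    (35961136671824 + 0*s) * (3*s + 3 - 2*x - 2*y)*x * (x)^2 +
    (36222599817152 + 0*s) * (3*s + 3 - 2*x - 2*y)*x * (y)^2 +
    (2712797507012396576 - 1213168907955413216*s) * x*y +
    (542278204028218512 - 242497914267533904*s) * x*y*(p + s - 1) +
    (542278315826323488 - 242498228565735520*s) * x*y*(q + s - 1) +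
    (-241670344611268352 + 108086391056891904*s) * x*y*(4*s + 4 - (s + 1)*(p + q) - p*q - 4*x - 4*y) +
    (12851030857718441 - 5745126155624831*s) * (4*x + p*q)^2 +
    (12851038336366619 - 5745137366338973*s) * (4*y + p*q)^2 +
    (1546696042070880 - 683722945855488*s) * (q + p)^2 +
    (-1868673175444992 + 843711583092736*s) * (2*x + p)^2 +
    (1829297430944608 - 809940225359872*s) * (2*y + p)^2 +
    (1829215597596276 - 810015408016532*s) * (2*x + q)^2 +
    (-1868607064191192 + 843741957273328*s) * (2*y + q)^2 +
    (59024 + 0*s) * (- 29028*y - 18928*x - 1125*q + 65536*p)^2 +
    (236032 + 0*s) * (- 9716*y - 14681*x + 32768*q)^2 +
    (4213248 + 0*s) * (- 1937*y + 16384*x)^2 +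
    (1115179668471808 + 0*s) * (y)^2 +
    (s*s - 5) * (- 121597189939003392 - 202661983231672320*s - 94575592174780416*s^2 - 13510798882111488*s^3 - 378302368699121664*y - 288230376151711744*y*s - 54043195528445952*y*s^2 - 272278498512115536*y^2 - 54043195528445952*y^2*s - 378302368699121664*x - 288230376151711744*x*s - 54043195528445952*x*s^2 - 541552823542714240*x*y - 108086391056891904*x*y*s - 272278420033153912*x^2 - 54043195528445952*x^2*s - 101330991615836160*q - 114841790497947648*q*s - 27021597764222976*q*s^2 - 179638598332278344*q*y - 81064793292668928*q*y*s - 195439113719810160*q*x - 81064793292668928*q*x*s - 30409724182786474*q^2 - 13510798882111488*q^2*s - 101330991615836160*p - 114841790497947648*p*s - 27021597764222976*p*s^2 - 195439108810080256*p*y - 81064793292668928*p*y*s - 179638658005467136*p*x - 81064793292668928*p*x*s - 108982087248248832*p*q - 54043195528445952*p*q*s - 108086391056891904*p*q*y - 108086391056891904*p*q*x - 27021597764222976*p*q^2 - 30409722436255744*p^2 - 13510798882111488*p^2*s - 27021597764222976*p^2*q)"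
  unfolding Nf_def by algebra

lemma cert_main:
  fixes p q x y s :: real
  assumes s2: "s*s = 5" and sl: "2236067/1000000 < s" and su: "s < 2236068/1000000"
    and hp: "0 \<le> p + s - 1" and hq: "0 \<le> q + s - 1" and hx: "0 \<le> x" and hy: "0 \<le> y"
    and hR: "0 \<le> 4*s + 4 - (s + 1)*(p + q) - p*q - 4*x - 4*y" and hT: "0 \<le> 3*s + 3 - 2*x - 2*y"
  shows "0 \<le> Nf (p + s - 1) (q + s - 1) (x + 1) (y + 1) s \<and>
    (Nf (p + s - 1) (q + s - 1) (x + 1) (y + 1) s = 0 \<longrightarrow> p = 0 \<and> q = 0 \<and> x = 0 \<and> y = 0)"
proof -
  have c0: "0 \<le> (-120826296339933016 + 54043195528445952*s)" using sl su by linarith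
  have c1: "0 \<le> (-120826486482764704 + 54043195528445952*s)" using sl su by linarith
  have c2: "0 \<le> (-14241459460898816 + 6372946554126336*s)" using sl su by linarith
  have c3: "0 \<le> (-14241465453078858 + 6372904247727210*s)" using sl su by linarith
  have c4: "0 \<le> (-1868607064191192 + 843741957273328*s)" using sl su by linarith
  have c5: "0 \<le> (-1868673175444992 + 843711583092736*s)" using sl su by linarith
  have c6: "0 \<le> (-241670344611268352 + 108086391056891904*s)" using sl su by linarith
  have c7: "0 \<le> (-85279674805731912 + 38146310675628032*s)" using sl su by linarith
  have c8: "0 \<le> (-85279679204573404 + 38146334540690428*s)" using sl su by linarith
  have c9: "0 \<le> (10552320 + 0*s)" using sl su by linarith
  have c10: "0 \<le> (1112832 + 0*s)" using sl su by linarith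
  have c11: "0 \<le> (1115179668471808 + 0*s)" using sl su by linarith
  have c12: "0 \<le> (1121854047649792 - 497692220325888*s)" using sl su by linarith
  have c13: "0 \<le> (1121876653502476 - 497694423880224*s)" using sl su by linarith
  have c14: "0 \<le> (1128528 + 0*s)" using sl su by linarith
  have c15: "0 \<le> (112905983891283456 - 50484980145389824*s)" using sl su by linarith
  have c16: "0 \<le> (112906071831482856 - 50485038992518056*s)" using sl su by linarith
  have c17: "0 \<le> (1136928 + 0*s)" using sl su by linarith
  have c18: "0 \<le> (115489836573613936 - 51640503451516928*s)" using sl su by linarith
  have c19: "0 \<le> (115489947071023616 - 51640376578789584*s)" using sl su by linarith
  have c20: "0 \<le> (11732 + 0*s)" using sl su by linarith
  have c21: "0 \<le> (120056 + 0*s)" using sl su by linarith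
  have c22: "0 \<le> (123385820479488 + 0*s)" using sl su by linarith
  have c23: "0 \<le> (126360 + 0*s)" using sl su by linarith
  have c24: "0 \<le> (1283553127427497280 - 573990395136377344*s)" using sl su by linarith
  have c25: "0 \<le> (1283554698688168752 - 573988290291994928*s)" using sl su by linarith
  have c26: "0 \<le> (12851030857718441 - 5745126155624831*s)" using sl su by linarith
  have c27: "0 \<le> (12851038336366619 - 5745137366338973*s)" using sl su by linarith
  have c28: "0 \<le> (1367552 + 0*s)" using sl su by linarith
  have c29: "0 \<le> (1398848 + 0*s)" using sl su by linarith
  have c30: "0 \<le> (144480 + 0*s)" using sl su by linarith
  have c31: "0 \<le> (1498015873368064 + 0*s)" using sl su by linarith
  have c32: "0 \<le> (153856 + 0*s)" using sl su by linarith
  have c33: "0 \<le> (154296 + 0*s)" using sl su by linarith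
  have c34: "0 \<le> (1546696042070880 - 683722945855488*s)" using sl su by linarith
  have c35: "0 \<le> (1586595278880768 + 0*s)" using sl su by linarith
  have c36: "0 \<le> (1635584 + 0*s)" using sl su by linarith
  have c37: "0 \<le> (1636320 + 0*s)" using sl su by linarith
  have c38: "0 \<le> (1644416 + 0*s)" using sl su by linarith
  have c39: "0 \<le> (1644704 + 0*s)" using sl su by linarith
  have c40: "0 \<le> (170528 + 0*s)" using sl su by linarith
  have c41: "0 \<le> (1748736 + 0*s)" using sl su by linarith
  have c42: "0 \<le> (1750147633512448 + 0*s)" using sl su by linarith
  have c43: "0 \<le> (17898901413576 + 0*s)" using sl su by linarith
  have c44: "0 \<le> (17906639446792 + 0*s)" using sl su by linarith
  have c45: "0 \<le> (17930030572928 + 0*s)" using sl su by linarith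
  have c46: "0 \<le> (1797632 + 0*s)" using sl su by linarith
  have c47: "0 \<le> (17999515133112 + 0*s)" using sl su by linarith
  have c48: "0 \<le> (180354266693632 + 0*s)" using sl su by linarith
  have c49: "0 \<le> (1820928694550528 + 0*s)" using sl su by linarith
  have c50: "0 \<le> (1829215597596276 - 810015408016532*s)" using sl su by linarith
  have c51: "0 \<le> (1829297430944608 - 809940225359872*s)" using sl su by linarith
  have c52: "0 \<le> (183168 + 0*s)" using sl su by linarith
  have c53: "0 \<le> (194656 + 0*s)" using sl su by linarith
  have c54: "0 \<le> (2021632 + 0*s)" using sl su by linarith
  have c55: "0 \<le> (204062486167552 + 0*s)" using sl su by linarith
  have c56: "0 \<le> (22421052165547776 - 9994754402358432*s)" using sl su by linarith
  have c57: "0 \<le> (22422017835429056 - 9995042257119808*s)" using sl su by linarith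
  have c58: "0 \<le> (22672 + 0*s)" using sl su by linarith
  have c59: "0 \<le> (226732101234581016 - 101382108576002728*s)" using sl su by linarith
  have c60: "0 \<le> (226732406293108992 - 101381928319687360*s)" using sl su by linarith
  have c61: "0 \<le> (2330624 + 0*s)" using sl su by linarith
  have c62: "0 \<le> (236032 + 0*s)" using sl su by linarith
  have c63: "0 \<le> (24586752 + 0*s)" using sl su by linarith
  have c64: "0 \<le> (25180 + 0*s)" using sl su by linarith
  have c65: "0 \<le> (253576 + 0*s)" using sl su by linarith
  have c66: "0 \<le> (258894 + 0*s)" using sl su by linarith
  have c67: "0 \<le> (2712797507012396576 - 1213168907955413216*s)" using sl su by linarith
  have c68: "0 \<le> (2775040 + 0*s)" using sl su by linarith
  have c69: "0 \<le> (310921272492032 + 0*s)" using sl su by linarith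
  have c70: "0 \<le> (3292448 + 0*s)" using sl su by linarith
  have c71: "0 \<le> (335488485425152 + 0*s)" using sl su by linarith
  have c72: "0 \<le> (344176 + 0*s)" using sl su by linarith
  have c73: "0 \<le> (35590302611408 + 0*s)" using sl su by linarith
  have c74: "0 \<le> (35961136671824 + 0*s)" using sl su by linarith
  have c75: "0 \<le> (35965280015648 + 0*s)" using sl su by linarith
  have c76: "0 \<le> (36028285949040 + 0*s)" using sl su by linarith
  have c77: "0 \<le> (36058344066624 + 0*s)" using sl su by linarith
  have c78: "0 \<le> (36213750685392 + 0*s)" using sl su by linarith
  have c79: "0 \<le> (36222599817152 + 0*s)" using sl su by linarith
  have c80: "0 \<le> (362403374190310256 - 162055858607988768*s)" using sl su by linarith
  have c81: "0 \<le> (362403729081867280 - 162056065783766864*s)" using sl su by linarith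
  have c82: "0 \<le> (36263448318336 + 0*s)" using sl su by linarith
  have c83: "0 \<le> (36278959651456 + 0*s)" using sl su by linarith
  have c84: "0 \<le> (36521412013840 + 0*s)" using sl su by linarith
  have c85: "0 \<le> (369440 + 0*s)" using sl su by linarith
  have c86: "0 \<le> (374720 + 0*s)" using sl su by linarith
  have c87: "0 \<le> (380928 + 0*s)" using sl su by linarith
  have c88: "0 \<le> (38208 + 0*s)" using sl su by linarith
  have c89: "0 \<le> (38244352 + 0*s)" using sl su by linarith
  have c90: "0 \<le> (38626 + 0*s)" using sl su by linarith
  have c91: "0 \<le> (39112 + 0*s)" using sl su by linarith
  have c92: "0 \<le> (4213248 + 0*s)" using sl su by linarith
  have c93: "0 \<le> (4501125726208 + 0*s)" using sl su by linarith
  have c94: "0 \<le> (4515622931378 + 0*s)" using sl su by linarith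
  have c95: "0 \<le> (4522497115794748 - 2020535360147684*s)" using sl su by linarith
  have c96: "0 \<le> (4586 + 0*s)" using sl su by linarith
  have c97: "0 \<le> (45920 + 0*s)" using sl su by linarith
  have c98: "0 \<le> (47879712952991264 - 21380405082800928*s)" using sl su by linarith
  have c99: "0 \<le> (47880574739063072 - 21380507950238912*s)" using sl su by linarith
  have c100: "0 \<le> (483922555174912 + 0*s)" using sl su by linarith
  have c101: "0 \<le> (48792 + 0*s)" using sl su by linarith
  have c102: "0 \<le> (48852 + 0*s)" using sl su by linarith
  have c103: "0 \<le> (4915392 + 0*s)" using sl su by linarith
  have c104: "0 \<le> (515361715781632 + 0*s)" using sl su by linarith
  have c105: "0 \<le> (5312908904890368 + 0*s)" using sl su by linarith
  have c106: "0 \<le> (541216 + 0*s)" using sl su by linarith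
  have c107: "0 \<le> (542278204028218512 - 242497914267533904*s)" using sl su by linarith
  have c108: "0 \<le> (542278315826323488 - 242498228565735520*s)" using sl su by linarith
  have c109: "0 \<le> (54288 + 0*s)" using sl su by linarith
  have c110: "0 \<le> (5547998234804224 + 0*s)" using sl su by linarith
  have c111: "0 \<le> (572000 + 0*s)" using sl su by linarith
  have c112: "0 \<le> (572982997024768 + 0*s)" using sl su by linarith
  have c113: "0 \<le> (578583634378752 + 0*s)" using sl su by linarith
  have c114: "0 \<le> (59024 + 0*s)" using sl su by linarith
  have c115: "0 \<le> (593323962138624 + 0*s)" using sl su by linarith
  have c116: "0 \<le> (60431139517497344 - 27021597764222976*s)" using sl su by linarith
  have c117: "0 \<le> (60431172468473856 - 27021597764222976*s)" using sl su by linarith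
  have c118: "0 \<le> (60431218655707508 - 27021597764222976*s)" using sl su by linarith
  have c119: "0 \<le> (60431234154751044 - 27021597764222976*s)" using sl su by linarith
  have c120: "0 \<le> (6139264 + 0*s)" using sl su by linarith
  have c121: "0 \<le> (618406571147264 + 0*s)" using sl su by linarith
  have c122: "0 \<le> (639915767365632 + 0*s)" using sl su by linarith
  have c123: "0 \<le> (677848918523904 + 0*s)" using sl su by linarith
  have c124: "0 \<le> (69760 + 0*s)" using sl su by linarith
  have c125: "0 \<le> (71908745143904 + 0*s)" using sl su by linarith
  have c126: "0 \<le> (71996772182208 + 0*s)" using sl su by linarith
  have c127: "0 \<le> (72298507348352 + 0*s)" using sl su by linarith
  have c128: "0 \<le> (728192 + 0*s)" using sl su by linarith
  have c129: "0 \<le> (747049431597056 + 0*s)" using sl su by linarith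
  have c130: "0 \<le> (751653636538368 + 0*s)" using sl su by linarith
  have c131: "0 \<le> (754816 + 0*s)" using sl su by linarith
  have c132: "0 \<le> (762336 + 0*s)" using sl su by linarith
  have c133: "0 \<le> (764800 + 0*s)" using sl su by linarith
  have c134: "0 \<le> (768920 + 0*s)" using sl su by linarith
  have c135: "0 \<le> (829328 + 0*s)" using sl su by linarith
  have c136: "0 \<le> (862080 + 0*s)" using sl su by linarith
  have c137: "0 \<le> (89000 + 0*s)" using sl su by linarith
  have c138: "0 \<le> (8947045352552 + 0*s)" using sl su by linarith
  have c139: "0 \<le> (9019431321600 + 0*s)" using sl su by linarith
  have c140: "0 \<le> (9021929811904 + 0*s)" using sl su by linarith
  have c141: "0 \<le> (9022056934144 + 0*s)" using sl su by linarith
  have c142: "0 \<le> (9022578510016 + 0*s)" using sl su by linarith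
  have c143: "0 \<le> (908696 + 0*s)" using sl su by linarith
  have c144: "0 \<le> (93688 + 0*s)" using sl su by linarith
  have c145: "0 \<le> (95664 + 0*s)" using sl su by linarith
  have c146: "0 \<le> (9616 + 0*s)" using sl su by linarith
  have t0: "0 \<le> (754816 + 0*s) * (- 60616*y + 20906*y^2 - 60616*x - 115010*x*y + 20906*x^2 + 56059*q + 55035*q*y + 88034*q*x + 56059*p + 88034*p*y + 55035*p*x + 32768*p*q)^2"
    by (intro mult_nonneg_nonneg zero_le_power2 c131 hp hq hx hy hR hT)
  have t1: "0 \<le> (120056 + 0*s) * (- 10296*y + 39338*y^2 - 51726*x - 66730*x*y - 42846*x^2 - 299*q + 14240*q*y - 14800*q*x + 47703*p + 118433*p*y + 65536*p*x)^2"
    by (intro mult_nonneg_nonneg zero_le_power2 c21 hp hq hx hy hR hT)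
  have t2: "0 \<le> (862080 + 0*s) * (35970*y + 61486*y^2 - 33854*x + 2578*x*y - 61110*x^2 - 20809*q - 5645*q*y - 66160*q*x + 19786*p + 65536*p*y)^2"
    by (intro mult_nonneg_nonneg zero_le_power2 c136 hp hq hx hy hR hT)
  have t3: "0 \<le> (369440 + 0*s) * (- 25394*y - 20032*y^2 - 5656*x - 31996*x*y + 19476*x^2 + 25144*q + 26233*q*y + 65536*q*x + 1380*p)^2"
    by (intro mult_nonneg_nonneg zero_le_power2 c85 hp hq hx hy hR hT)
  have t4: "0 \<le> (48792 + 0*s) * (9940*y + 27828*y^2 - 32054*x - 27612*x*y - 32326*x^2 + 9657*q + 65536*q*y - 309*p)^2"
    by (intro mult_nonneg_nonneg zero_le_power2 c101 hp hq hx hy hR hT)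
  have t5: "0 \<le> (253576 + 0*s) * (71760*y + 101458*y^2 + 74932*x + 183118*x*y + 131072*x^2 - 13012*q - 12801*p)^2"
    by (intro mult_nonneg_nonneg zero_le_power2 c65 hp hq hx hy hR hT)
  have t6: "0 \<le> (541216 + 0*s) * (18930*y + 38769*y^2 + 14777*x + 65536*x*y - 5003*q - 5279*p)^2"
    by (intro mult_nonneg_nonneg zero_le_power2 c106 hp hq hx hy hR hT)
  have t7: "0 \<le> (54288 + 0*s) * (34726*y + 131072*y^2 + 20686*x + 2005*q + 1071*p)^2"
    by (intro mult_nonneg_nonneg zero_le_power2 c109 hp hq hx hy hR hT)
  have t8: "0 \<le> (93688 + 0*s) * x * (- 23072*y + 7976*x - 687*q + 65536*p)^2"
    by (intro mult_nonneg_nonneg zero_le_power2 c144 hp hq hx hy hR hT)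
  have t9: "0 \<le> (2021632 + 0*s) * x * (- 5781*y + 1884*x + 16384*q)^2"
    by (intro mult_nonneg_nonneg zero_le_power2 c54 hp hq hx hy hR hT)
  have t10: "0 \<le> (1748736 + 0*s) * x * (5319*y + 32768*x)^2"
    by (intro mult_nonneg_nonneg zero_le_power2 c41 hp hq hx hy hR hT)
  have t11: "0 \<le> (1586595278880768 + 0*s) * x * (y)^2"
    by (intro mult_nonneg_nonneg zero_le_power2 c35 hp hq hx hy hR hT)
  have t12: "0 \<le> (126360 + 0*s) * y * (7474*y - 22942*x - 509*q + 65536*p)^2"
    by (intro mult_nonneg_nonneg zero_le_power2 c23 hp hq hx hy hR hT)
  have t13: "0 \<le> (374720 + 0*s) * y * (4028*y - 11657*x + 32768*q)^2"
    by (intro mult_nonneg_nonneg zero_le_power2 c86 hp hq hx hy hR hT)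
  have t14: "0 \<le> (380928 + 0*s) * y * (12209*y + 65536*x)^2"
    by (intro mult_nonneg_nonneg zero_le_power2 c87 hp hq hx hy hR hT)
  have t15: "0 \<le> (1820928694550528 + 0*s) * y * (y)^2"
    by (intro mult_nonneg_nonneg zero_le_power2 c49 hp hq hx hy hR hT)
  have t16: "0 \<le> (11732 + 0*s) * (p + s - 1) * (38626*y - 1320*x + 19589*q + 65536*p)^2"
    by (intro mult_nonneg_nonneg zero_le_power2 c20 hp hq hx hy hR hT)
  have t17: "0 \<le> (764800 + 0*s) * (p + s - 1) * (- 2392*y - 3911*x + 16384*q)^2"
    by (intro mult_nonneg_nonneg zero_le_power2 c133 hp hq hx hy hR hT)
  have t18: "0 \<le> (183168 + 0*s) * (p + s - 1) * (- 13785*y + 65536*x)^2"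
    by (intro mult_nonneg_nonneg zero_le_power2 c52 hp hq hx hy hR hT)
  have t19: "0 \<le> (747049431597056 + 0*s) * (p + s - 1) * (y)^2"
    by (intro mult_nonneg_nonneg zero_le_power2 c129 hp hq hx hy hR hT)
  have t20: "0 \<le> (48852 + 0*s) * (q + s - 1) * (- 15402*y - 6590*x + 4705*q + 65536*p)^2"
    by (intro mult_nonneg_nonneg zero_le_power2 c102 hp hq hx hy hR hT)
  have t21: "0 \<le> (45920 + 0*s) * (q + s - 1) * (1678*y + 20743*x + 32768*q)^2"
    by (intro mult_nonneg_nonneg zero_le_power2 c97 hp hq hx hy hR hT)
  have t22: "0 \<le> (728192 + 0*s) * (q + s - 1) * (- 6935*y + 32768*x)^2"
    by (intro mult_nonneg_nonneg zero_le_power2 c128 hp hq hx hy hR hT)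
  have t23: "0 \<le> (751653636538368 + 0*s) * (q + s - 1) * (y)^2"
    by (intro mult_nonneg_nonneg zero_le_power2 c130 hp hq hx hy hR hT)
  have t24: "0 \<le> (258894 + 0*s) * (4*s + 4 - (s + 1)*(p + q) - p*q - 4*x - 4*y) * (- 89180*y - 70244*x + 29247*q + 65536*p)^2"
    by (intro mult_nonneg_nonneg zero_le_power2 c66 hp hq hx hy hR hT)
  have t25: "0 \<le> (829328 + 0*s) * (4*s + 4 - (s + 1)*(p + q) - p*q - 4*x - 4*y) * (- 19008*y - 36107*x + 32768*q)^2"
    by (intro mult_nonneg_nonneg zero_le_power2 c135 hp hq hx hy hR hT)
  have t26: "0 \<le> (2775040 + 0*s) * (4*s + 4 - (s + 1)*(p + q) - p*q - 4*x - 4*y) * (1455*y + 8192*x)^2"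
    by (intro mult_nonneg_nonneg zero_le_power2 c68 hp hq hx hy hR hT)
  have t27: "0 \<le> (180354266693632 + 0*s) * (4*s + 4 - (s + 1)*(p + q) - p*q - 4*x - 4*y) * (y)^2"
    by (intro mult_nonneg_nonneg zero_le_power2 c48 hp hq hx hy hR hT)
  have t28: "0 \<le> (25180 + 0*s) * (3*s + 3 - 2*x - 2*y) * (- 56532*y - 18910*x + 14679*q + 65536*p)^2"
    by (intro mult_nonneg_nonneg zero_le_power2 c64 hp hq hx hy hR hT)
  have t29: "0 \<le> (95664 + 0*s) * (3*s + 3 - 2*x - 2*y) * (- 3289*y - 27529*x + 32768*q)^2"
    by (intro mult_nonneg_nonneg zero_le_power2 c145 hp hq hx hy hR hT)
  have t30: "0 \<le> (10552320 + 0*s) * (3*s + 3 - 2*x - 2*y) * (- 3299*y + 8192*x)^2"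
    by (intro mult_nonneg_nonneg zero_le_power2 c9 hp hq hx hy hR hT)
  have t31: "0 \<le> (593323962138624 + 0*s) * (3*s + 3 - 2*x - 2*y) * (y)^2"
    by (intro mult_nonneg_nonneg zero_le_power2 c115 hp hq hx hy hR hT)
  have t32: "0 \<le> (9616 + 0*s) * (p + s - 1)*x * (254560*y - 589338*x - 186917*q + 65536*p)^2"
    by (intro mult_nonneg_nonneg zero_le_power2 c146 hp hq hx hy hR hT)
  have t33: "0 \<le> (1797632 + 0*s) * (p + s - 1)*x * (- 11505*y + 24381*x + 16384*q)^2"
    by (intro mult_nonneg_nonneg zero_le_power2 c46 hp hq hx hy hR hT)
  have t34: "0 \<le> (1398848 + 0*s) * (p + s - 1)*x * (- 1097*y + 32768*x)^2"
    by (intro mult_nonneg_nonneg zero_le_power2 c29 hp hq hx hy hR hT)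
  have t35: "0 \<le> (639915767365632 + 0*s) * (p + s - 1)*x * (y)^2"
    by (intro mult_nonneg_nonneg zero_le_power2 c122 hp hq hx hy hR hT)
  have t36: "0 \<le> (153856 + 0*s) * (p + s - 1)*y * (33749*y + 18665*x + 3991*q + 16384*p)^2"
    by (intro mult_nonneg_nonneg zero_le_power2 c32 hp hq hx hy hR hT)
  have t37: "0 \<le> (1367552 + 0*s) * (p + s - 1)*y * (28531*y - 11431*x + 16384*q)^2"
    by (intro mult_nonneg_nonneg zero_le_power2 c28 hp hq hx hy hR hT)
  have t38: "0 \<le> (144480 + 0*s) * (p + s - 1)*y * (- 6469*y + 65536*x)^2"
    by (intro mult_nonneg_nonneg zero_le_power2 c30 hp hq hx hy hR hT)
  have t39: "0 \<le> (1750147633512448 + 0*s) * (p + s - 1)*y * (y)^2"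
    by (intro mult_nonneg_nonneg zero_le_power2 c42 hp hq hx hy hR hT)
  have t40: "0 \<le> (344176 + 0*s) * (q + s - 1)*x * (- 21694*y + 58521*x + 892*q + 32768*p)^2"
    by (intro mult_nonneg_nonneg zero_le_power2 c72 hp hq hx hy hR hT)
  have t41: "0 \<le> (38208 + 0*s) * (q + s - 1)*x * (42899*y + 53598*x + 32768*q)^2"
    by (intro mult_nonneg_nonneg zero_le_power2 c88 hp hq hx hy hR hT)
  have t42: "0 \<le> (1635584 + 0*s) * (q + s - 1)*x * (- 1143*y + 32768*x)^2"
    by (intro mult_nonneg_nonneg zero_le_power2 c36 hp hq hx hy hR hT)
  have t43: "0 \<le> (618406571147264 + 0*s) * (q + s - 1)*x * (y)^2"
    by (intro mult_nonneg_nonneg zero_le_power2 c121 hp hq hx hy hR hT)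
  have t44: "0 \<le> (762336 + 0*s) * (q + s - 1)*y * (71156*y - 31883*x - 4716*q + 32768*p)^2"
    by (intro mult_nonneg_nonneg zero_le_power2 c132 hp hq hx hy hR hT)
  have t45: "0 \<le> (22672 + 0*s) * (q + s - 1)*y * (- 155594*y + 61651*x + 32768*q)^2"
    by (intro mult_nonneg_nonneg zero_le_power2 c58 hp hq hx hy hR hT)
  have t46: "0 \<le> (38244352 + 0*s) * (q + s - 1)*y * (- 321*y + 4096*x)^2"
    by (intro mult_nonneg_nonneg zero_le_power2 c89 hp hq hx hy hR hT)
  have t47: "0 \<le> (1498015873368064 + 0*s) * (q + s - 1)*y * (y)^2"
    by (intro mult_nonneg_nonneg zero_le_power2 c31 hp hq hx hy hR hT)
  have t48: "0 \<le> (908696 + 0*s) * (p + s - 1)*(q + s - 1) * (21339*y + 9928*x + 24896*q + 32768*p)^2"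
    by (intro mult_nonneg_nonneg zero_le_power2 c143 hp hq hx hy hR hT)
  have t49: "0 \<le> (24586752 + 0*s) * (p + s - 1)*(q + s - 1) * (- 1858*y + 4079*x + 4096*q)^2"
    by (intro mult_nonneg_nonneg zero_le_power2 c63 hp hq hx hy hR hT)
  have t50: "0 \<le> (1112832 + 0*s) * (p + s - 1)*(q + s - 1) * (- 23533*y + 32768*x)^2"
    by (intro mult_nonneg_nonneg zero_le_power2 c10 hp hq hx hy hR hT)
  have t51: "0 \<le> (578583634378752 + 0*s) * (p + s - 1)*(q + s - 1) * (y)^2"
    by (intro mult_nonneg_nonneg zero_le_power2 c113 hp hq hx hy hR hT)
  have t52: "0 \<le> (1128528 + 0*s) * (3*s + 3 - 2*x - 2*y)*x * (- 31890*y + 25135*x - 3*q + 32768*p)^2"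
    by (intro mult_nonneg_nonneg zero_le_power2 c14 hp hq hx hy hR hT)
  have t53: "0 \<le> (1636320 + 0*s) * (3*s + 3 - 2*x - 2*y)*x * (- 32429*y - 16172*x + 32768*q)^2"
    by (intro mult_nonneg_nonneg zero_le_power2 c37 hp hq hx hy hR hT)
  have t54: "0 \<le> (4915392 + 0*s) * (3*s + 3 - 2*x - 2*y)*x * (503*y + 32768*x)^2"
    by (intro mult_nonneg_nonneg zero_le_power2 c103 hp hq hx hy hR hT)
  have t55: "0 \<le> (677848918523904 + 0*s) * (3*s + 3 - 2*x - 2*y)*x * (y)^2"
    by (intro mult_nonneg_nonneg zero_le_power2 c123 hp hq hx hy hR hT)
  have t56: "0 \<le> (1644704 + 0*s) * (3*s + 3 - 2*x - 2*y)*y * (- 16091*y - 32262*x - 2*q + 32768*p)^2"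
    by (intro mult_nonneg_nonneg zero_le_power2 c39 hp hq hx hy hR hT)
  have t57: "0 \<le> (1136928 + 0*s) * (3*s + 3 - 2*x - 2*y)*y * (24948*y - 31657*x + 32768*q)^2"
    by (intro mult_nonneg_nonneg zero_le_power2 c17 hp hq hx hy hR hT)
  have t58: "0 \<le> (170528 + 0*s) * (3*s + 3 - 2*x - 2*y)*y * (7041*y + 65536*x)^2"
    by (intro mult_nonneg_nonneg zero_le_power2 c40 hp hq hx hy hR hT)
  have t59: "0 \<le> (5312908904890368 + 0*s) * (3*s + 3 - 2*x - 2*y)*y * (y)^2"
    by (intro mult_nonneg_nonneg zero_le_power2 c105 hp hq hx hy hR hT)
  have t60: "0 \<le> (2330624 + 0*s) * x*y * (32768 + 31612*y + 31612*x - 12659*q - 12659*p)^2"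
    by (intro mult_nonneg_nonneg zero_le_power2 c61 hp hq hx hy hR hT)
  have t61: "0 \<le> (3292448 + 0*s) * x*y * (7204*y - 21436*x - 23183*q + 32768*p)^2"
    by (intro mult_nonneg_nonneg zero_le_power2 c70 hp hq hx hy hR hT)
  have t62: "0 \<le> (1644416 + 0*s) * x*y * (- 32715*y - 15941*x + 32768*q)^2"
    by (intro mult_nonneg_nonneg zero_le_power2 c38 hp hq hx hy hR hT)
  have t63: "0 \<le> (6139264 + 0*s) * x*y * (- 13041*y + 32768*x)^2"
    by (intro mult_nonneg_nonneg zero_le_power2 c120 hp hq hx hy hR hT)
  have t64: "0 \<le> (5547998234804224 + 0*s) * x*y * (y)^2"
    by (intro mult_nonneg_nonneg zero_le_power2 c110 hp hq hx hy hR hT)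
  have t65: "0 \<le> (572982997024768 + 0*s) * x*y*(p + s - 1)"
    by (intro mult_nonneg_nonneg zero_le_power2 c112 hp hq hx hy hR hT)
  have t66: "0 \<le> (572982997024768 + 0*s) * x*y*(q + s - 1)"
    by (intro mult_nonneg_nonneg zero_le_power2 c112 hp hq hx hy hR hT)
  have t67: "0 \<le> (515361715781632 + 0*s) * x*y*(4*s + 4 - (s + 1)*(p + q) - p*q - 4*x - 4*y)"
    by (intro mult_nonneg_nonneg zero_le_power2 c104 hp hq hx hy hR hT)
  have t68: "0 \<le> (204062486167552 + 0*s) * x*x*(4*s + 4 - (s + 1)*(p + q) - p*q - 4*x - 4*y)"
    by (intro mult_nonneg_nonneg zero_le_power2 c55 hp hq hx hy hR hT)
  have t69: "0 \<le> (204062486167552 + 0*s) * y*y*(4*s + 4 - (s + 1)*(p + q) - p*q - 4*x - 4*y)"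
    by (intro mult_nonneg_nonneg zero_le_power2 c55 hp hq hx hy hR hT)
  have t70: "0 \<le> (483922555174912 + 0*s) * x*y*(3*s + 3 - 2*x - 2*y)"
    by (intro mult_nonneg_nonneg zero_le_power2 c100 hp hq hx hy hR hT)
  have t71: "0 \<le> (38626 + 0*s) * (p + s - 1)*(3*s + 3 - 2*x - 2*y) * (8882*y - 83818*x + 126349*q + 65536*p)^2"
    by (intro mult_nonneg_nonneg zero_le_power2 c90 hp hq hx hy hR hT)
  have t72: "0 \<le> (194656 + 0*s) * (p + s - 1)*(3*s + 3 - 2*x - 2*y) * (1834*y - 35095*x + 32768*q)^2"
    by (intro mult_nonneg_nonneg zero_le_power2 c53 hp hq hx hy hR hT)
  have t73: "0 \<le> (154296 + 0*s) * (p + s - 1)*(3*s + 3 - 2*x - 2*y) * (- 44333*y + 65536*x)^2"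
    by (intro mult_nonneg_nonneg zero_le_power2 c33 hp hq hx hy hR hT)
  have t74: "0 \<le> (310921272492032 + 0*s) * (p + s - 1)*(3*s + 3 - 2*x - 2*y) * (y)^2"
    by (intro mult_nonneg_nonneg zero_le_power2 c69 hp hq hx hy hR hT)
  have t75: "0 \<le> (768920 + 0*s) * (q + s - 1)*(3*s + 3 - 2*x - 2*y) * (- 25119*y + 2185*x + 12694*q + 32768*p)^2"
    by (intro mult_nonneg_nonneg zero_le_power2 c134 hp hq hx hy hR hT)
  have t76: "0 \<le> (39112 + 0*s) * (q + s - 1)*(3*s + 3 - 2*x - 2*y) * (25753*y + 905*x + 32768*q)^2"
    by (intro mult_nonneg_nonneg zero_le_power2 c91 hp hq hx hy hR hT)
  have t77: "0 \<le> (572000 + 0*s) * (q + s - 1)*(3*s + 3 - 2*x - 2*y) * (- 23917*y + 32768*x)^2"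
    by (intro mult_nonneg_nonneg zero_le_power2 c111 hp hq hx hy hR hT)
  have t78: "0 \<le> (335488485425152 + 0*s) * (q + s - 1)*(3*s + 3 - 2*x - 2*y) * (y)^2"
    by (intro mult_nonneg_nonneg zero_le_power2 c71 hp hq hx hy hR hT)
  have t79: "0 \<le> (4586 + 0*s) * (3*s + 3 - 2*x - 2*y)*(3*s + 3 - 2*x - 2*y) * (- 164612*y + 75626*x + 14533*q + 65536*p)^2"
    by (intro mult_nonneg_nonneg zero_le_power2 c96 hp hq hx hy hR hT)
  have t80: "0 \<le> (69760 + 0*s) * (3*s + 3 - 2*x - 2*y)*(3*s + 3 - 2*x - 2*y) * (29482*y - 47691*x + 16384*q)^2"
    by (intro mult_nonneg_nonneg zero_le_power2 c124 hp hq hx hy hR hT)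
  have t81: "0 \<le> (89000 + 0*s) * (3*s + 3 - 2*x - 2*y)*(3*s + 3 - 2*x - 2*y) * (- 53933*y + 65536*x)^2"
    by (intro mult_nonneg_nonneg zero_le_power2 c137 hp hq hx hy hR hT)
  have t82: "0 \<le> (123385820479488 + 0*s) * (3*s + 3 - 2*x - 2*y)*(3*s + 3 - 2*x - 2*y) * (y)^2"
    by (intro mult_nonneg_nonneg zero_le_power2 c22 hp hq hx hy hR hT)
  have t83: "0 \<le> (4522497115794748 - 2020535360147684*s) * (p*q)^2"
    by (intro mult_nonneg_nonneg zero_le_power2 c95 hp hq hx hy hR hT)
  have t84: "0 \<le> (17930030572928 + 0*s) * (p*x)^2"
    by (intro mult_nonneg_nonneg zero_le_power2 c45 hp hq hx hy hR hT)
  have t85: "0 \<le> (17906639446792 + 0*s) * (p*y)^2"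
    by (intro mult_nonneg_nonneg zero_le_power2 c44 hp hq hx hy hR hT)
  have t86: "0 \<le> (17898901413576 + 0*s) * (q*x)^2"
    by (intro mult_nonneg_nonneg zero_le_power2 c43 hp hq hx hy hR hT)
  have t87: "0 \<le> (17999515133112 + 0*s) * (q*y)^2"
    by (intro mult_nonneg_nonneg zero_le_power2 c47 hp hq hx hy hR hT)
  have t88: "0 \<le> (71908745143904 + 0*s) * (x^2)^2"
    by (intro mult_nonneg_nonneg zero_le_power2 c125 hp hq hx hy hR hT)
  have t89: "0 \<le> (72298507348352 + 0*s) * (x*y)^2"
    by (intro mult_nonneg_nonneg zero_le_power2 c127 hp hq hx hy hR hT)
  have t90: "0 \<le> (71996772182208 + 0*s) * (y^2)^2"
    by (intro mult_nonneg_nonneg zero_le_power2 c126 hp hq hx hy hR hT)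
  have t91: "0 \<le> (-85279674805731912 + 38146310675628032*s) * (p)^2"
    by (intro mult_nonneg_nonneg zero_le_power2 c7 hp hq hx hy hR hT)
  have t92: "0 \<le> (-85279679204573404 + 38146334540690428*s) * (q)^2"
    by (intro mult_nonneg_nonneg zero_le_power2 c8 hp hq hx hy hR hT)
  have t93: "0 \<le> (1283554698688168752 - 573988290291994928*s) * (x)^2"
    by (intro mult_nonneg_nonneg zero_le_power2 c25 hp hq hx hy hR hT)
  have t94: "0 \<le> (1283553127427497280 - 573990395136377344*s) * (y)^2"
    by (intro mult_nonneg_nonneg zero_le_power2 c24 hp hq hx hy hR hT)
  have t95: "0 \<le> (112905983891283456 - 50484980145389824*s) * x * (p)^2"
    by (intro mult_nonneg_nonneg zero_le_power2 c15 hp hq hx hy hR hT)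
  have t96: "0 \<le> (115489947071023616 - 51640376578789584*s) * x * (q)^2"
    by (intro mult_nonneg_nonneg zero_le_power2 c19 hp hq hx hy hR hT)
  have t97: "0 \<le> (47879712952991264 - 21380405082800928*s) * x * (x)^2"
    by (intro mult_nonneg_nonneg zero_le_power2 c98 hp hq hx hy hR hT)
  have t98: "0 \<le> (22422017835429056 - 9995042257119808*s) * x * (y)^2"
    by (intro mult_nonneg_nonneg zero_le_power2 c57 hp hq hx hy hR hT)
  have t99: "0 \<le> (115489836573613936 - 51640503451516928*s) * y * (p)^2"
    by (intro mult_nonneg_nonneg zero_le_power2 c18 hp hq hx hy hR hT)
  have t100: "0 \<le> (112906071831482856 - 50485038992518056*s) * y * (q)^2"
    by (intro mult_nonneg_nonneg zero_le_power2 c16 hp hq hx hy hR hT)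
  have t101: "0 \<le> (22421052165547776 - 9994754402358432*s) * y * (x)^2"
    by (intro mult_nonneg_nonneg zero_le_power2 c56 hp hq hx hy hR hT)
  have t102: "0 \<le> (47880574739063072 - 21380507950238912*s) * y * (y)^2"
    by (intro mult_nonneg_nonneg zero_le_power2 c99 hp hq hx hy hR hT)
  have t103: "0 \<le> (1121854047649792 - 497692220325888*s) * (p + s - 1) * (p)^2"
    by (intro mult_nonneg_nonneg zero_le_power2 c12 hp hq hx hy hR hT)
  have t104: "0 \<le> (-14241465453078858 + 6372904247727210*s) * (p + s - 1) * (q)^2"
    by (intro mult_nonneg_nonneg zero_le_power2 c3 hp hq hx hy hR hT)
  have t105: "0 \<le> (226732101234581016 - 101382108576002728*s) * (p + s - 1) * (x)^2"
    by (intro mult_nonneg_nonneg zero_le_power2 c59 hp hq hx hy hR hT)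
  have t106: "0 \<le> (362403729081867280 - 162056065783766864*s) * (p + s - 1) * (y)^2"
    by (intro mult_nonneg_nonneg zero_le_power2 c81 hp hq hx hy hR hT)
  have t107: "0 \<le> (-14241459460898816 + 6372946554126336*s) * (q + s - 1) * (p)^2"
    by (intro mult_nonneg_nonneg zero_le_power2 c2 hp hq hx hy hR hT)
  have t108: "0 \<le> (1121876653502476 - 497694423880224*s) * (q + s - 1) * (q)^2"
    by (intro mult_nonneg_nonneg zero_le_power2 c13 hp hq hx hy hR hT)
  have t109: "0 \<le> (362403374190310256 - 162055858607988768*s) * (q + s - 1) * (x)^2"
    by (intro mult_nonneg_nonneg zero_le_power2 c80 hp hq hx hy hR hT)
  have t110: "0 \<le> (226732406293108992 - 101381928319687360*s) * (q + s - 1) * (y)^2"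
    by (intro mult_nonneg_nonneg zero_le_power2 c60 hp hq hx hy hR hT)
  have t111: "0 \<le> (4501125726208 + 0*s) * (4*s + 4 - (s + 1)*(p + q) - p*q - 4*x - 4*y) * (p)^2"
    by (intro mult_nonneg_nonneg zero_le_power2 c93 hp hq hx hy hR hT)
  have t112: "0 \<le> (4515622931378 + 0*s) * (4*s + 4 - (s + 1)*(p + q) - p*q - 4*x - 4*y) * (q)^2"
    by (intro mult_nonneg_nonneg zero_le_power2 c94 hp hq hx hy hR hT)
  have t113: "0 \<le> (-120826486482764704 + 54043195528445952*s) * (4*s + 4 - (s + 1)*(p + q) - p*q - 4*x - 4*y) * (x)^2"
    by (intro mult_nonneg_nonneg zero_le_power2 c1 hp hq hx hy hR hT)
  have t114: "0 \<le> (-120826296339933016 + 54043195528445952*s) * (4*s + 4 - (s + 1)*(p + q) - p*q - 4*x - 4*y) * (y)^2"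
    by (intro mult_nonneg_nonneg zero_le_power2 c0 hp hq hx hy hR hT)
  have t115: "0 \<le> (9019431321600 + 0*s) * (p + s - 1)*x * (p)^2"
    by (intro mult_nonneg_nonneg zero_le_power2 c139 hp hq hx hy hR hT)
  have t116: "0 \<le> (60431234154751044 - 27021597764222976*s) * (p + s - 1)*x * (q)^2"
    by (intro mult_nonneg_nonneg zero_le_power2 c119 hp hq hx hy hR hT)
  have t117: "0 \<le> (36521412013840 + 0*s) * (p + s - 1)*x * (x)^2"
    by (intro mult_nonneg_nonneg zero_le_power2 c84 hp hq hx hy hR hT)
  have t118: "0 \<le> (36278959651456 + 0*s) * (p + s - 1)*x * (y)^2"
    by (intro mult_nonneg_nonneg zero_le_power2 c83 hp hq hx hy hR hT)
  have t119: "0 \<le> (9019431321600 + 0*s) * (p + s - 1)*y * (p)^2"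
    by (intro mult_nonneg_nonneg zero_le_power2 c139 hp hq hx hy hR hT)
  have t120: "0 \<le> (60431218655707508 - 27021597764222976*s) * (p + s - 1)*y * (q)^2"
    by (intro mult_nonneg_nonneg zero_le_power2 c118 hp hq hx hy hR hT)
  have t121: "0 \<le> (35590302611408 + 0*s) * (p + s - 1)*y * (x)^2"
    by (intro mult_nonneg_nonneg zero_le_power2 c73 hp hq hx hy hR hT)
  have t122: "0 \<le> (36058344066624 + 0*s) * (p + s - 1)*y * (y)^2"
    by (intro mult_nonneg_nonneg zero_le_power2 c77 hp hq hx hy hR hT)
  have t123: "0 \<le> (60431172468473856 - 27021597764222976*s) * (q + s - 1)*x * (p)^2"
    by (intro mult_nonneg_nonneg zero_le_power2 c117 hp hq hx hy hR hT)
  have t124: "0 \<le> (9021929811904 + 0*s) * (q + s - 1)*x * (q)^2"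
    by (intro mult_nonneg_nonneg zero_le_power2 c140 hp hq hx hy hR hT)
  have t125: "0 \<le> (36028285949040 + 0*s) * (q + s - 1)*x * (x)^2"
    by (intro mult_nonneg_nonneg zero_le_power2 c76 hp hq hx hy hR hT)
  have t126: "0 \<le> (35965280015648 + 0*s) * (q + s - 1)*x * (y)^2"
    by (intro mult_nonneg_nonneg zero_le_power2 c75 hp hq hx hy hR hT)
  have t127: "0 \<le> (60431139517497344 - 27021597764222976*s) * (q + s - 1)*y * (p)^2"
    by (intro mult_nonneg_nonneg zero_le_power2 c116 hp hq hx hy hR hT)
  have t128: "0 \<le> (9022578510016 + 0*s) * (q + s - 1)*y * (q)^2"
    by (intro mult_nonneg_nonneg zero_le_power2 c142 hp hq hx hy hR hT)
  have t129: "0 \<le> (36213750685392 + 0*s) * (q + s - 1)*y * (x)^2"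
    by (intro mult_nonneg_nonneg zero_le_power2 c78 hp hq hx hy hR hT)
  have t130: "0 \<le> (36263448318336 + 0*s) * (q + s - 1)*y * (y)^2"
    by (intro mult_nonneg_nonneg zero_le_power2 c82 hp hq hx hy hR hT)
  have t131: "0 \<le> (9022056934144 + 0*s) * (3*s + 3 - 2*x - 2*y)*x * (p)^2"
    by (intro mult_nonneg_nonneg zero_le_power2 c141 hp hq hx hy hR hT)
  have t132: "0 \<le> (8947045352552 + 0*s) * (3*s + 3 - 2*x - 2*y)*x * (q)^2"
    by (intro mult_nonneg_nonneg zero_le_power2 c138 hp hq hx hy hR hT)
  have t133: "0 \<le> (35961136671824 + 0*s) * (3*s + 3 - 2*x - 2*y)*x * (x)^2"
    by (intro mult_nonneg_nonneg zero_le_power2 c74 hp hq hx hy hR hT)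
  have t134: "0 \<le> (36222599817152 + 0*s) * (3*s + 3 - 2*x - 2*y)*x * (y)^2"
    by (intro mult_nonneg_nonneg zero_le_power2 c79 hp hq hx hy hR hT)
  have t135: "0 \<le> (2712797507012396576 - 1213168907955413216*s) * x*y"
    by (intro mult_nonneg_nonneg zero_le_power2 c67 hp hq hx hy hR hT)
  have t136: "0 \<le> (542278204028218512 - 242497914267533904*s) * x*y*(p + s - 1)"
    by (intro mult_nonneg_nonneg zero_le_power2 c107 hp hq hx hy hR hT)
  have t137: "0 \<le> (542278315826323488 - 242498228565735520*s) * x*y*(q + s - 1)"
    by (intro mult_nonneg_nonneg zero_le_power2 c108 hp hq hx hy hR hT)
  have t138: "0 \<le> (-241670344611268352 + 108086391056891904*s) * x*y*(4*s + 4 - (s + 1)*(p + q) - p*q - 4*x - 4*y)"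
    by (intro mult_nonneg_nonneg zero_le_power2 c6 hp hq hx hy hR hT)
  have t139: "0 \<le> (12851030857718441 - 5745126155624831*s) * (4*x + p*q)^2"
    by (intro mult_nonneg_nonneg zero_le_power2 c26 hp hq hx hy hR hT)
  have t140: "0 \<le> (12851038336366619 - 5745137366338973*s) * (4*y + p*q)^2"
    by (intro mult_nonneg_nonneg zero_le_power2 c27 hp hq hx hy hR hT)
  have t141: "0 \<le> (1546696042070880 - 683722945855488*s) * (q + p)^2"
    by (intro mult_nonneg_nonneg zero_le_power2 c34 hp hq hx hy hR hT)
  have t142: "0 \<le> (-1868673175444992 + 843711583092736*s) * (2*x + p)^2"
    by (intro mult_nonneg_nonneg zero_le_power2 c5 hp hq hx hy hR hT)
  have t143: "0 \<le> (1829297430944608 - 809940225359872*s) * (2*y + p)^2"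
    by (intro mult_nonneg_nonneg zero_le_power2 c51 hp hq hx hy hR hT)
  have t144: "0 \<le> (1829215597596276 - 810015408016532*s) * (2*x + q)^2"
    by (intro mult_nonneg_nonneg zero_le_power2 c50 hp hq hx hy hR hT)
  have t145: "0 \<le> (-1868607064191192 + 843741957273328*s) * (2*y + q)^2"
    by (intro mult_nonneg_nonneg zero_le_power2 c4 hp hq hx hy hR hT)
  have t146: "0 \<le> (59024 + 0*s) * (- 29028*y - 18928*x - 1125*q + 65536*p)^2"
    by (intro mult_nonneg_nonneg zero_le_power2 c114 hp hq hx hy hR hT)
  have t147: "0 \<le> (236032 + 0*s) * (- 9716*y - 14681*x + 32768*q)^2"
    by (intro mult_nonneg_nonneg zero_le_power2 c62 hp hq hx hy hR hT)
  have t148: "0 \<le> (4213248 + 0*s) * (- 1937*y + 16384*x)^2"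
    by (intro mult_nonneg_nonneg zero_le_power2 c92 hp hq hx hy hR hT)
  have t149: "0 \<le> (1115179668471808 + 0*s) * (y)^2"
    by (intro mult_nonneg_nonneg zero_le_power2 c11 hp hq hx hy hR hT)
  have rest: "0 \<le> (754816 + 0*s) * (- 60616*y + 20906*y^2 - 60616*x - 115010*x*y + 20906*x^2 + 56059*q + 55035*q*y + 88034*q*x + 56059*p + 88034*p*y + 55035*p*x + 32768*p*q)^2 +
    (120056 + 0*s) * (- 10296*y + 39338*y^2 - 51726*x - 66730*x*y - 42846*x^2 - 299*q + 14240*q*y - 14800*q*x + 47703*p + 118433*p*y + 65536*p*x)^2 +
    (862080 + 0*s) * (35970*y + 61486*y^2 - 33854*x + 2578*x*y - 61110*x^2 - 20809*q - 5645*q*y - 66160*q*x + 19786*p + 65536*p*y)^2 +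
    (369440 + 0*s) * (- 25394*y - 20032*y^2 - 5656*x - 31996*x*y + 19476*x^2 + 25144*q + 26233*q*y + 65536*q*x + 1380*p)^2 +
    (48792 + 0*s) * (9940*y + 27828*y^2 - 32054*x - 27612*x*y - 32326*x^2 + 9657*q + 65536*q*y - 309*p)^2 +
    (253576 + 0*s) * (71760*y + 101458*y^2 + 74932*x + 183118*x*y + 131072*x^2 - 13012*q - 12801*p)^2 +
    (541216 + 0*s) * (18930*y + 38769*y^2 + 14777*x + 65536*x*y - 5003*q - 5279*p)^2 +
    (54288 + 0*s) * (34726*y + 131072*y^2 + 20686*x + 2005*q + 1071*p)^2 +
    (93688 + 0*s) * x * (- 23072*y + 7976*x - 687*q + 65536*p)^2 +
    (2021632 + 0*s) * x * (- 5781*y + 1884*x + 16384*q)^2 +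
    (1748736 + 0*s) * x * (5319*y + 32768*x)^2 +
    (1586595278880768 + 0*s) * x * (y)^2 +
    (126360 + 0*s) * y * (7474*y - 22942*x - 509*q + 65536*p)^2 +
    (374720 + 0*s) * y * (4028*y - 11657*x + 32768*q)^2 +
    (380928 + 0*s) * y * (12209*y + 65536*x)^2 +
    (1820928694550528 + 0*s) * y * (y)^2 +
    (11732 + 0*s) * (p + s - 1) * (38626*y - 1320*x + 19589*q + 65536*p)^2 +
    (764800 + 0*s) * (p + s - 1) * (- 2392*y - 3911*x + 16384*q)^2 +
    (183168 + 0*s) * (p + s - 1) * (- 13785*y + 65536*x)^2 +
    (747049431597056 + 0*s) * (p + s - 1) * (y)^2 +
    (48852 + 0*s) * (q + s - 1) * (- 15402*y - 6590*x + 4705*q + 65536*p)^2 +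
    (45920 + 0*s) * (q + s - 1) * (1678*y + 20743*x + 32768*q)^2 +
    (728192 + 0*s) * (q + s - 1) * (- 6935*y + 32768*x)^2 +
    (751653636538368 + 0*s) * (q + s - 1) * (y)^2 +
    (258894 + 0*s) * (4*s + 4 - (s + 1)*(p + q) - p*q - 4*x - 4*y) * (- 89180*y - 70244*x + 29247*q + 65536*p)^2 +
    (829328 + 0*s) * (4*s + 4 - (s + 1)*(p + q) - p*q - 4*x - 4*y) * (- 19008*y - 36107*x + 32768*q)^2 +
    (2775040 + 0*s) * (4*s + 4 - (s + 1)*(p + q) - p*q - 4*x - 4*y) * (1455*y + 8192*x)^2 +
    (180354266693632 + 0*s) * (4*s + 4 - (s + 1)*(p + q) - p*q - 4*x - 4*y) * (y)^2 +
    (25180 + 0*s) * (3*s + 3 - 2*x - 2*y) * (- 56532*y - 18910*x + 14679*q + 65536*p)^2 +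
    (95664 + 0*s) * (3*s + 3 - 2*x - 2*y) * (- 3289*y - 27529*x + 32768*q)^2 +
    (10552320 + 0*s) * (3*s + 3 - 2*x - 2*y) * (- 3299*y + 8192*x)^2 +
    (593323962138624 + 0*s) * (3*s + 3 - 2*x - 2*y) * (y)^2 +
    (9616 + 0*s) * (p + s - 1)*x * (254560*y - 589338*x - 186917*q + 65536*p)^2 +
    (1797632 + 0*s) * (p + s - 1)*x * (- 11505*y + 24381*x + 16384*q)^2 +
    (1398848 + 0*s) * (p + s - 1)*x * (- 1097*y + 32768*x)^2 +
    (639915767365632 + 0*s) * (p + s - 1)*x * (y)^2 +
    (153856 + 0*s) * (p + s - 1)*y * (33749*y + 18665*x + 3991*q + 16384*p)^2 +
    (1367552 + 0*s) * (p + s - 1)*y * (28531*y - 11431*x + 16384*q)^2 +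
    (144480 + 0*s) * (p + s - 1)*y * (- 6469*y + 65536*x)^2 +
    (1750147633512448 + 0*s) * (p + s - 1)*y * (y)^2 +
    (344176 + 0*s) * (q + s - 1)*x * (- 21694*y + 58521*x + 892*q + 32768*p)^2 +
    (38208 + 0*s) * (q + s - 1)*x * (42899*y + 53598*x + 32768*q)^2 +
    (1635584 + 0*s) * (q + s - 1)*x * (- 1143*y + 32768*x)^2 +
    (618406571147264 + 0*s) * (q + s - 1)*x * (y)^2 +
    (762336 + 0*s) * (q + s - 1)*y * (71156*y - 31883*x - 4716*q + 32768*p)^2 +
    (22672 + 0*s) * (q + s - 1)*y * (- 155594*y + 61651*x + 32768*q)^2 +
    (38244352 + 0*s) * (q + s - 1)*y * (- 321*y + 4096*x)^2 +
    (1498015873368064 + 0*s) * (q + s - 1)*y * (y)^2 +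
    (908696 + 0*s) * (p + s - 1)*(q + s - 1) * (21339*y + 9928*x + 24896*q + 32768*p)^2 +
    (24586752 + 0*s) * (p + s - 1)*(q + s - 1) * (- 1858*y + 4079*x + 4096*q)^2 +
    (1112832 + 0*s) * (p + s - 1)*(q + s - 1) * (- 23533*y + 32768*x)^2 +
    (578583634378752 + 0*s) * (p + s - 1)*(q + s - 1) * (y)^2 +
    (1128528 + 0*s) * (3*s + 3 - 2*x - 2*y)*x * (- 31890*y + 25135*x - 3*q + 32768*p)^2 +
    (1636320 + 0*s) * (3*s + 3 - 2*x - 2*y)*x * (- 32429*y - 16172*x + 32768*q)^2 +
    (4915392 + 0*s) * (3*s + 3 - 2*x - 2*y)*x * (503*y + 32768*x)^2 +
    (677848918523904 + 0*s) * (3*s + 3 - 2*x - 2*y)*x * (y)^2 +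
    (1644704 + 0*s) * (3*s + 3 - 2*x - 2*y)*y * (- 16091*y - 32262*x - 2*q + 32768*p)^2 +
    (1136928 + 0*s) * (3*s + 3 - 2*x - 2*y)*y * (24948*y - 31657*x + 32768*q)^2 +
    (170528 + 0*s) * (3*s + 3 - 2*x - 2*y)*y * (7041*y + 65536*x)^2 +
    (5312908904890368 + 0*s) * (3*s + 3 - 2*x - 2*y)*y * (y)^2 +
    (2330624 + 0*s) * x*y * (32768 + 31612*y + 31612*x - 12659*q - 12659*p)^2 +
    (3292448 + 0*s) * x*y * (7204*y - 21436*x - 23183*q + 32768*p)^2 +
    (1644416 + 0*s) * x*y * (- 32715*y - 15941*x + 32768*q)^2 +
    (6139264 + 0*s) * x*y * (- 13041*y + 32768*x)^2 +
    (5547998234804224 + 0*s) * x*y * (y)^2 +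
    (572982997024768 + 0*s) * x*y*(p + s - 1) +
    (572982997024768 + 0*s) * x*y*(q + s - 1) +
    (515361715781632 + 0*s) * x*y*(4*s + 4 - (s + 1)*(p + q) - p*q - 4*x - 4*y) +
    (204062486167552 + 0*s) * x*x*(4*s + 4 - (s + 1)*(p + q) - p*q - 4*x - 4*y) +
    (204062486167552 + 0*s) * y*y*(4*s + 4 - (s + 1)*(p + q) - p*q - 4*x - 4*y) +
    (483922555174912 + 0*s) * x*y*(3*s + 3 - 2*x - 2*y) +
    (38626 + 0*s) * (p + s - 1)*(3*s + 3 - 2*x - 2*y) * (8882*y - 83818*x + 126349*q + 65536*p)^2 +
    (194656 + 0*s) * (p + s - 1)*(3*s + 3 - 2*x - 2*y) * (1834*y - 35095*x + 32768*q)^2 +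
    (154296 + 0*s) * (p + s - 1)*(3*s + 3 - 2*x - 2*y) * (- 44333*y + 65536*x)^2 +
    (310921272492032 + 0*s) * (p + s - 1)*(3*s + 3 - 2*x - 2*y) * (y)^2 +
    (768920 + 0*s) * (q + s - 1)*(3*s + 3 - 2*x - 2*y) * (- 25119*y + 2185*x + 12694*q + 32768*p)^2 +
    (39112 + 0*s) * (q + s - 1)*(3*s + 3 - 2*x - 2*y) * (25753*y + 905*x + 32768*q)^2 +
    (572000 + 0*s) * (q + s - 1)*(3*s + 3 - 2*x - 2*y) * (- 23917*y + 32768*x)^2 +
    (335488485425152 + 0*s) * (q + s - 1)*(3*s + 3 - 2*x - 2*y) * (y)^2 +
    (4586 + 0*s) * (3*s + 3 - 2*x - 2*y)*(3*s + 3 - 2*x - 2*y) * (- 164612*y + 75626*x + 14533*q + 65536*p)^2 +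
    (69760 + 0*s) * (3*s + 3 - 2*x - 2*y)*(3*s + 3 - 2*x - 2*y) * (29482*y - 47691*x + 16384*q)^2 +
    (89000 + 0*s) * (3*s + 3 - 2*x - 2*y)*(3*s + 3 - 2*x - 2*y) * (- 53933*y + 65536*x)^2 +
    (123385820479488 + 0*s) * (3*s + 3 - 2*x - 2*y)*(3*s + 3 - 2*x - 2*y) * (y)^2 +
    (4522497115794748 - 2020535360147684*s) * (p*q)^2 +
    (17930030572928 + 0*s) * (p*x)^2 +
    (17906639446792 + 0*s) * (p*y)^2 +
    (17898901413576 + 0*s) * (q*x)^2 +
    (17999515133112 + 0*s) * (q*y)^2 +
    (71908745143904 + 0*s) * (x^2)^2 +
    (72298507348352 + 0*s) * (x*y)^2 +
    (71996772182208 + 0*s) * (y^2)^2 +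
    (-85279674805731912 + 38146310675628032*s) * (p)^2 +
    (-85279679204573404 + 38146334540690428*s) * (q)^2 +
    (1283554698688168752 - 573988290291994928*s) * (x)^2 +
    (1283553127427497280 - 573990395136377344*s) * (y)^2 +
    (112905983891283456 - 50484980145389824*s) * x * (p)^2 +
    (115489947071023616 - 51640376578789584*s) * x * (q)^2 +
    (47879712952991264 - 21380405082800928*s) * x * (x)^2 +
    (22422017835429056 - 9995042257119808*s) * x * (y)^2 +
    (115489836573613936 - 51640503451516928*s) * y * (p)^2 +
    (112906071831482856 - 50485038992518056*s) * y * (q)^2 +
    (22421052165547776 - 9994754402358432*s) * y * (x)^2 +
    (47880574739063072 - 21380507950238912*s) * y * (y)^2 +
    (1121854047649792 - 497692220325888*s) * (p + s - 1) * (p)^2 +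
    (-14241465453078858 + 6372904247727210*s) * (p + s - 1) * (q)^2 +
    (226732101234581016 - 101382108576002728*s) * (p + s - 1) * (x)^2 +
    (362403729081867280 - 162056065783766864*s) * (p + s - 1) * (y)^2 +
    (-14241459460898816 + 6372946554126336*s) * (q + s - 1) * (p)^2 +
    (1121876653502476 - 497694423880224*s) * (q + s - 1) * (q)^2 +
    (362403374190310256 - 162055858607988768*s) * (q + s - 1) * (x)^2 +
    (226732406293108992 - 101381928319687360*s) * (q + s - 1) * (y)^2 +
    (4501125726208 + 0*s) * (4*s + 4 - (s + 1)*(p + q) - p*q - 4*x - 4*y) * (p)^2 +
    (4515622931378 + 0*s) * (4*s + 4 - (s + 1)*(p + q) - p*q - 4*x - 4*y) * (q)^2 +
    (-120826486482764704 + 54043195528445952*s) * (4*s + 4 - (s + 1)*(p + q) - p*q - 4*x - 4*y) * (x)^2 +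
    (-120826296339933016 + 54043195528445952*s) * (4*s + 4 - (s + 1)*(p + q) - p*q - 4*x - 4*y) * (y)^2 +
    (9019431321600 + 0*s) * (p + s - 1)*x * (p)^2 +
    (60431234154751044 - 27021597764222976*s) * (p + s - 1)*x * (q)^2 +
    (36521412013840 + 0*s) * (p + s - 1)*x * (x)^2 +
    (36278959651456 + 0*s) * (p + s - 1)*x * (y)^2 +
    (9019431321600 + 0*s) * (p + s - 1)*y * (p)^2 +
    (60431218655707508 - 27021597764222976*s) * (p + s - 1)*y * (q)^2 +
    (35590302611408 + 0*s) * (p + s - 1)*y * (x)^2 +
    (36058344066624 + 0*s) * (p + s - 1)*y * (y)^2 +
    (60431172468473856 - 27021597764222976*s) * (q + s - 1)*x * (p)^2 +
    (9021929811904 + 0*s) * (q + s - 1)*x * (q)^2 +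
    (36028285949040 + 0*s) * (q + s - 1)*x * (x)^2 +
    (35965280015648 + 0*s) * (q + s - 1)*x * (y)^2 +
    (60431139517497344 - 27021597764222976*s) * (q + s - 1)*y * (p)^2 +
    (9022578510016 + 0*s) * (q + s - 1)*y * (q)^2 +
    (36213750685392 + 0*s) * (q + s - 1)*y * (x)^2 +
    (36263448318336 + 0*s) * (q + s - 1)*y * (y)^2 +
    (9022056934144 + 0*s) * (3*s + 3 - 2*x - 2*y)*x * (p)^2 +
    (8947045352552 + 0*s) * (3*s + 3 - 2*x - 2*y)*x * (q)^2 +
    (35961136671824 + 0*s) * (3*s + 3 - 2*x - 2*y)*x * (x)^2 +
    (36222599817152 + 0*s) * (3*s + 3 - 2*x - 2*y)*x * (y)^2 +
    (2712797507012396576 - 1213168907955413216*s) * x*y +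
    (542278204028218512 - 242497914267533904*s) * x*y*(p + s - 1) +
    (542278315826323488 - 242498228565735520*s) * x*y*(q + s - 1) +
    (-241670344611268352 + 108086391056891904*s) * x*y*(4*s + 4 - (s + 1)*(p + q) - p*q - 4*x - 4*y) +
    (12851030857718441 - 5745126155624831*s) * (4*x + p*q)^2 +
    (12851038336366619 - 5745137366338973*s) * (4*y + p*q)^2 +
    (1546696042070880 - 683722945855488*s) * (q + p)^2 +
    (-1868673175444992 + 843711583092736*s) * (2*x + p)^2 +
    (1829297430944608 - 809940225359872*s) * (2*y + p)^2 +
    (1829215597596276 - 810015408016532*s) * (2*x + q)^2 +
    (-1868607064191192 + 843741957273328*s) * (2*y + q)^2"
    by (intro add_nonneg_nonneg t0 t1 t2 t3 t4 t5 t6 t7 t8 t9 t10 t11 t12 t13 t14 t15 t16 t17 t18 t19 t20 t21 t22 t23 t24 t25 t26 t27 t28 t29 t30 t31 t32 t33 t34 t35 t36 t37 t38 t39 t40 t41 t42 t43 t44 t45 t46 t47 t48 t49 t50 t51 t52 t53 t54 t55 t56 t57 t58 t59 t60 t61 t62 t63 t64 t65 t66 t67 t68 t69 t70 t71 t72 t73 t74 t75 t76 t77 t78 t79 t80 t81 t82 t83 t84 t85 t86 t87 t88 t89 t90 t91 t92 t93 t94 t95 t96 t97 t98 t99 t100 t101 t102 t103 t104 t105 t106 t107 t108 t109 t110 t111 t112 t113 t114 t115 t116 t117 t118 t119 t120 t121 t122 t123 t124 t125 t126 t127 t128 t129 t130 t131 t132 t133 t134 t135 t136 t137 t138 t139 t140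 t141 t142 t143 t144 t145)
  have id: "140737488355328 * Nf (p + s - 1) (q + s - 1) (x + 1) (y + 1) s =
    (754816 + 0*s) * (- 60616*y + 20906*y^2 - 60616*x - 115010*x*y + 20906*x^2 + 56059*q + 55035*q*y + 88034*q*x + 56059*p + 88034*p*y + 55035*p*x + 32768*p*q)^2 +
    (120056 + 0*s) * (- 10296*y + 39338*y^2 - 51726*x - 66730*x*y - 42846*x^2 - 299*q + 14240*q*y - 14800*q*x + 47703*p + 118433*p*y + 65536*p*x)^2 +
    (862080 + 0*s) * (35970*y + 61486*y^2 - 33854*x + 2578*x*y - 61110*x^2 - 20809*q - 5645*q*y - 66160*q*x + 19786*p + 65536*p*y)^2 +
    (369440 + 0*s) * (- 25394*y - 20032*y^2 - 5656*x - 31996*x*y + 19476*x^2 + 25144*q + 26233*q*y + 65536*q*x + 1380*p)^2 +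
    (48792 + 0*s) * (9940*y + 27828*y^2 - 32054*x - 27612*x*y - 32326*x^2 + 9657*q + 65536*q*y - 309*p)^2 +
    (253576 + 0*s) * (71760*y + 101458*y^2 + 74932*x + 183118*x*y + 131072*x^2 - 13012*q - 12801*p)^2 +
    (541216 + 0*s) * (18930*y + 38769*y^2 + 14777*x + 65536*x*y - 5003*q - 5279*p)^2 +
    (54288 + 0*s) * (34726*y + 131072*y^2 + 20686*x + 2005*q + 1071*p)^2 +
    (93688 + 0*s) * x * (- 23072*y + 7976*x - 687*q + 65536*p)^2 +
    (2021632 + 0*s) * x * (- 5781*y + 1884*x + 16384*q)^2 +
    (1748736 + 0*s) * x * (5319*y + 32768*x)^2 +
    (1586595278880768 + 0*s) * x * (y)^2 +
    (126360 + 0*s) * y * (7474*y - 22942*x - 509*q + 65536*p)^2 +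
    (374720 + 0*s) * y * (4028*y - 11657*x + 32768*q)^2 +
    (380928 + 0*s) * y * (12209*y + 65536*x)^2 +
    (1820928694550528 + 0*s) * y * (y)^2 +
    (11732 + 0*s) * (p + s - 1) * (38626*y - 1320*x + 19589*q + 65536*p)^2 +
    (764800 + 0*s) * (p + s - 1) * (- 2392*y - 3911*x + 16384*q)^2 +
    (183168 + 0*s) * (p + s - 1) * (- 13785*y + 65536*x)^2 +
    (747049431597056 + 0*s) * (p + s - 1) * (y)^2 +
    (48852 + 0*s) * (q + s - 1) * (- 15402*y - 6590*x + 4705*q + 65536*p)^2 +
    (45920 + 0*s) * (q + s - 1) * (1678*y + 20743*x + 32768*q)^2 +
    (728192 + 0*s) * (q + s - 1) * (- 6935*y + 32768*x)^2 +
    (751653636538368 + 0*s) * (q + s - 1) * (y)^2 +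
    (258894 + 0*s) * (4*s + 4 - (s + 1)*(p + q) - p*q - 4*x - 4*y) * (- 89180*y - 70244*x + 29247*q + 65536*p)^2 +
    (829328 + 0*s) * (4*s + 4 - (s + 1)*(p + q) - p*q - 4*x - 4*y) * (- 19008*y - 36107*x + 32768*q)^2 +
    (2775040 + 0*s) * (4*s + 4 - (s + 1)*(p + q) - p*q - 4*x - 4*y) * (1455*y + 8192*x)^2 +
    (180354266693632 + 0*s) * (4*s + 4 - (s + 1)*(p + q) - p*q - 4*x - 4*y) * (y)^2 +
    (25180 + 0*s) * (3*s + 3 - 2*x - 2*y) * (- 56532*y - 18910*x + 14679*q + 65536*p)^2 +
    (95664 + 0*s) * (3*s + 3 - 2*x - 2*y) * (- 3289*y - 27529*x + 32768*q)^2 +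
    (10552320 + 0*s) * (3*s + 3 - 2*x - 2*y) * (- 3299*y + 8192*x)^2 +
    (593323962138624 + 0*s) * (3*s + 3 - 2*x - 2*y) * (y)^2 +
    (9616 + 0*s) * (p + s - 1)*x * (254560*y - 589338*x - 186917*q + 65536*p)^2 +
    (1797632 + 0*s) * (p + s - 1)*x * (- 11505*y + 24381*x + 16384*q)^2 +
    (1398848 + 0*s) * (p + s - 1)*x * (- 1097*y + 32768*x)^2 +
    (639915767365632 + 0*s) * (p + s - 1)*x * (y)^2 +
    (153856 + 0*s) * (p + s - 1)*y * (33749*y + 18665*x + 3991*q + 16384*p)^2 +
    (1367552 + 0*s) * (p + s - 1)*y * (28531*y - 11431*x + 16384*q)^2 +
    (144480 + 0*s) * (p + s - 1)*y * (- 6469*y + 65536*x)^2 +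
    (1750147633512448 + 0*s) * (p + s - 1)*y * (y)^2 +
    (344176 + 0*s) * (q + s - 1)*x * (- 21694*y + 58521*x + 892*q + 32768*p)^2 +
    (38208 + 0*s) * (q + s - 1)*x * (42899*y + 53598*x + 32768*q)^2 +
    (1635584 + 0*s) * (q + s - 1)*x * (- 1143*y + 32768*x)^2 +
    (618406571147264 + 0*s) * (q + s - 1)*x * (y)^2 +
    (762336 + 0*s) * (q + s - 1)*y * (71156*y - 31883*x - 4716*q + 32768*p)^2 +
    (22672 + 0*s) * (q + s - 1)*y * (- 155594*y + 61651*x + 32768*q)^2 +
    (38244352 + 0*s) * (q + s - 1)*y * (- 321*y + 4096*x)^2 +
    (1498015873368064 + 0*s) * (q + s - 1)*y * (y)^2 +
    (908696 + 0*s) * (p + s - 1)*(q + s - 1) * (21339*y + 9928*x + 24896*q + 32768*p)^2 +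
    (24586752 + 0*s) * (p + s - 1)*(q + s - 1) * (- 1858*y + 4079*x + 4096*q)^2 +
    (1112832 + 0*s) * (p + s - 1)*(q + s - 1) * (- 23533*y + 32768*x)^2 +
    (578583634378752 + 0*s) * (p + s - 1)*(q + s - 1) * (y)^2 +
    (1128528 + 0*s) * (3*s + 3 - 2*x - 2*y)*x * (- 31890*y + 25135*x - 3*q + 32768*p)^2 +
    (1636320 + 0*s) * (3*s + 3 - 2*x - 2*y)*x * (- 32429*y - 16172*x + 32768*q)^2 +
    (4915392 + 0*s) * (3*s + 3 - 2*x - 2*y)*x * (503*y + 32768*x)^2 +
    (677848918523904 + 0*s) * (3*s + 3 - 2*x - 2*y)*x * (y)^2 +
    (1644704 + 0*s) * (3*s + 3 - 2*x - 2*y)*y * (- 16091*y - 32262*x - 2*q + 32768*p)^2 +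
    (1136928 + 0*s) * (3*s + 3 - 2*x - 2*y)*y * (24948*y - 31657*x + 32768*q)^2 +
    (170528 + 0*s) * (3*s + 3 - 2*x - 2*y)*y * (7041*y + 65536*x)^2 +
    (5312908904890368 + 0*s) * (3*s + 3 - 2*x - 2*y)*y * (y)^2 +
    (2330624 + 0*s) * x*y * (32768 + 31612*y + 31612*x - 12659*q - 12659*p)^2 +
    (3292448 + 0*s) * x*y * (7204*y - 21436*x - 23183*q + 32768*p)^2 +
    (1644416 + 0*s) * x*y * (- 32715*y - 15941*x + 32768*q)^2 +
    (6139264 + 0*s) * x*y * (- 13041*y + 32768*x)^2 +
    (5547998234804224 + 0*s) * x*y * (y)^2 +
    (572982997024768 + 0*s) * x*y*(p + s - 1) +
    (572982997024768 + 0*s) * x*y*(q + s - 1) +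
    (515361715781632 + 0*s) * x*y*(4*s + 4 - (s + 1)*(p + q) - p*q - 4*x - 4*y) +
    (204062486167552 + 0*s) * x*x*(4*s + 4 - (s + 1)*(p + q) - p*q - 4*x - 4*y) +
    (204062486167552 + 0*s) * y*y*(4*s + 4 - (s + 1)*(p + q) - p*q - 4*x - 4*y) +
    (483922555174912 + 0*s) * x*y*(3*s + 3 - 2*x - 2*y) +
    (38626 + 0*s) * (p + s - 1)*(3*s + 3 - 2*x - 2*y) * (8882*y - 83818*x + 126349*q + 65536*p)^2 +
    (194656 + 0*s) * (p + s - 1)*(3*s + 3 - 2*x - 2*y) * (1834*y - 35095*x + 32768*q)^2 +
    (154296 + 0*s) * (p + s - 1)*(3*s + 3 - 2*x - 2*y) * (- 44333*y + 65536*x)^2 +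
    (310921272492032 + 0*s) * (p + s - 1)*(3*s + 3 - 2*x - 2*y) * (y)^2 +
    (768920 + 0*s) * (q + s - 1)*(3*s + 3 - 2*x - 2*y) * (- 25119*y + 2185*x + 12694*q + 32768*p)^2 +
    (39112 + 0*s) * (q + s - 1)*(3*s + 3 - 2*x - 2*y) * (25753*y + 905*x + 32768*q)^2 +
    (572000 + 0*s) * (q + s - 1)*(3*s + 3 - 2*x - 2*y) * (- 23917*y + 32768*x)^2 +
    (335488485425152 + 0*s) * (q + s - 1)*(3*s + 3 - 2*x - 2*y) * (y)^2 +
    (4586 + 0*s) * (3*s + 3 - 2*x - 2*y)*(3*s + 3 - 2*x - 2*y) * (- 164612*y + 75626*x + 14533*q + 65536*p)^2 +
    (69760 + 0*s) * (3*s + 3 - 2*x - 2*y)*(3*s + 3 - 2*x - 2*y) * (29482*y - 47691*x + 16384*q)^2 +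
    (89000 + 0*s) * (3*s + 3 - 2*x - 2*y)*(3*s + 3 - 2*x - 2*y) * (- 53933*y + 65536*x)^2 +
    (123385820479488 + 0*s) * (3*s + 3 - 2*x - 2*y)*(3*s + 3 - 2*x - 2*y) * (y)^2 +
    (4522497115794748 - 2020535360147684*s) * (p*q)^2 +
    (17930030572928 + 0*s) * (p*x)^2 +
    (17906639446792 + 0*s) * (p*y)^2 +
    (17898901413576 + 0*s) * (q*x)^2 +
    (17999515133112 + 0*s) * (q*y)^2 +
    (71908745143904 + 0*s) * (x^2)^2 +
    (72298507348352 + 0*s) * (x*y)^2 +
    (71996772182208 + 0*s) * (y^2)^2 +
    (-85279674805731912 + 38146310675628032*s) * (p)^2 +
    (-85279679204573404 + 38146334540690428*s) * (q)^2 +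
    (1283554698688168752 - 573988290291994928*s) * (x)^2 +
    (1283553127427497280 - 573990395136377344*s) * (y)^2 +
    (112905983891283456 - 50484980145389824*s) * x * (p)^2 +
    (115489947071023616 - 51640376578789584*s) * x * (q)^2 +
    (47879712952991264 - 21380405082800928*s) * x * (x)^2 +
    (22422017835429056 - 9995042257119808*s) * x * (y)^2 +
    (115489836573613936 - 51640503451516928*s) * y * (p)^2 +
    (112906071831482856 - 50485038992518056*s) * y * (q)^2 +
    (22421052165547776 - 9994754402358432*s) * y * (x)^2 +
    (47880574739063072 - 21380507950238912*s) * y * (y)^2 +
    (1121854047649792 - 497692220325888*s) * (p + s - 1) * (p)^2 +
    (-14241465453078858 + 6372904247727210*s) * (p + s - 1) * (q)^2 +
    (226732101234581016 - 101382108576002728*s) * (p + s - 1) * (x)^2 +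
    (362403729081867280 - 162056065783766864*s) * (p + s - 1) * (y)^2 +
    (-14241459460898816 + 6372946554126336*s) * (q + s - 1) * (p)^2 +
    (1121876653502476 - 497694423880224*s) * (q + s - 1) * (q)^2 +
    (362403374190310256 - 162055858607988768*s) * (q + s - 1) * (x)^2 +
    (226732406293108992 - 101381928319687360*s) * (q + s - 1) * (y)^2 +
    (4501125726208 + 0*s) * (4*s + 4 - (s + 1)*(p + q) - p*q - 4*x - 4*y) * (p)^2 +
    (4515622931378 + 0*s) * (4*s + 4 - (s + 1)*(p + q) - p*q - 4*x - 4*y) * (q)^2 +
    (-120826486482764704 + 54043195528445952*s) * (4*s + 4 - (s + 1)*(p + q) - p*q - 4*x - 4*y) * (x)^2 +
    (-120826296339933016 + 54043195528445952*s) * (4*s + 4 - (s + 1)*(p + q) - p*q - 4*x - 4*y) * (y)^2 +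
    (9019431321600 + 0*s) * (p + s - 1)*x * (p)^2 +
    (60431234154751044 - 27021597764222976*s) * (p + s - 1)*x * (q)^2 +
    (36521412013840 + 0*s) * (p + s - 1)*x * (x)^2 +
    (36278959651456 + 0*s) * (p + s - 1)*x * (y)^2 +
    (9019431321600 + 0*s) * (p + s - 1)*y * (p)^2 +
    (60431218655707508 - 27021597764222976*s) * (p + s - 1)*y * (q)^2 +
    (35590302611408 + 0*s) * (p + s - 1)*y * (x)^2 +
    (36058344066624 + 0*s) * (p + s - 1)*y * (y)^2 +
    (60431172468473856 - 27021597764222976*s) * (q + s - 1)*x * (p)^2 +
    (9021929811904 + 0*s) * (q + s - 1)*x * (q)^2 +
    (36028285949040 + 0*s) * (q + s - 1)*x * (x)^2 +
    (35965280015648 + 0*s) * (q + s - 1)*x * (y)^2 +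
    (60431139517497344 - 27021597764222976*s) * (q + s - 1)*y * (p)^2 +
    (9022578510016 + 0*s) * (q + s - 1)*y * (q)^2 +
    (36213750685392 + 0*s) * (q + s - 1)*y * (x)^2 +
    (36263448318336 + 0*s) * (q + s - 1)*y * (y)^2 +
    (9022056934144 + 0*s) * (3*s + 3 - 2*x - 2*y)*x * (p)^2 +
    (8947045352552 + 0*s) * (3*s + 3 - 2*x - 2*y)*x * (q)^2 +
    (35961136671824 + 0*s) * (3*s + 3 - 2*x - 2*y)*x * (x)^2 +
    (36222599817152 + 0*s) * (3*s + 3 - 2*x - 2*y)*x * (y)^2 +
    (2712797507012396576 - 1213168907955413216*s) * x*y +
    (542278204028218512 - 242497914267533904*s) * x*y*(p + s - 1) +
    (542278315826323488 - 242498228565735520*s) * x*y*(q + s - 1) +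
    (-241670344611268352 + 108086391056891904*s) * x*y*(4*s + 4 - (s + 1)*(p + q) - p*q - 4*x - 4*y) +
    (12851030857718441 - 5745126155624831*s) * (4*x + p*q)^2 +
    (12851038336366619 - 5745137366338973*s) * (4*y + p*q)^2 +
    (1546696042070880 - 683722945855488*s) * (q + p)^2 +
    (-1868673175444992 + 843711583092736*s) * (2*x + p)^2 +
    (1829297430944608 - 809940225359872*s) * (2*y + p)^2 +
    (1829215597596276 - 810015408016532*s) * (2*x + q)^2 +
    (-1868607064191192 + 843741957273328*s) * (2*y + q)^2 +
    (59024 + 0*s) * (- 29028*y - 18928*x - 1125*q + 65536*p)^2 +
    (236032 + 0*s) * (- 9716*y - 14681*x + 32768*q)^2 +
    (4213248 + 0*s) * (- 1937*y + 16384*x)^2 +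
    (1115179668471808 + 0*s) * (y)^2"
    using cert_id[where p=p and q=q and x=x and y=y and s=s] by (simp only: s2 diff_self mult_zero_left add_0_right)
  have key: "Nf (p + s - 1) (q + s - 1) (x + 1) (y + 1) s = 0 \<Longrightarrow> p = 0 \<and> q = 0 \<and> x = 0 \<and> y = 0"
  proof -
    assume h0: "Nf (p + s - 1) (q + s - 1) (x + 1) (y + 1) s = 0"
    have z: "140737488355328 * Nf (p + s - 1) (q + s - 1) (x + 1) (y + 1) s = 0" using h0 by simp
    have eq: "(754816 + 0*s) * (- 60616*y + 20906*y^2 - 60616*x - 115010*x*y + 20906*x^2 + 56059*q + 55035*q*y + 88034*q*x + 56059*p + 88034*p*y + 55035*p*x + 32768*p*q)^2 +
    (120056 + 0*s) * (- 10296*y + 39338*y^2 - 51726*x - 66730*x*y - 42846*x^2 - 299*q + 14240*q*y - 14800*q*x + 47703*p + 118433*p*y + 65536*p*x)^2 +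
    (862080 + 0*s) * (35970*y + 61486*y^2 - 33854*x + 2578*x*y - 61110*x^2 - 20809*q - 5645*q*y - 66160*q*x + 19786*p + 65536*p*y)^2 +
    (369440 + 0*s) * (- 25394*y - 20032*y^2 - 5656*x - 31996*x*y + 19476*x^2 + 25144*q + 26233*q*y + 65536*q*x + 1380*p)^2 +
    (48792 + 0*s) * (9940*y + 27828*y^2 - 32054*x - 27612*x*y - 32326*x^2 + 9657*q + 65536*q*y - 309*p)^2 +
    (253576 + 0*s) * (71760*y + 101458*y^2 + 74932*x + 183118*x*y + 131072*x^2 - 13012*q - 12801*p)^2 +
    (541216 + 0*s) * (18930*y + 38769*y^2 + 14777*x + 65536*x*y - 5003*q - 5279*p)^2 +
    (54288 + 0*s) * (34726*y + 131072*y^2 + 20686*x + 2005*q + 1071*p)^2 +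
    (93688 + 0*s) * x * (- 23072*y + 7976*x - 687*q + 65536*p)^2 +
    (2021632 + 0*s) * x * (- 5781*y + 1884*x + 16384*q)^2 +
    (1748736 + 0*s) * x * (5319*y + 32768*x)^2 +
    (1586595278880768 + 0*s) * x * (y)^2 +
    (126360 + 0*s) * y * (7474*y - 22942*x - 509*q + 65536*p)^2 +
    (374720 + 0*s) * y * (4028*y - 11657*x + 32768*q)^2 +
    (380928 + 0*s) * y * (12209*y + 65536*x)^2 +
    (1820928694550528 + 0*s) * y * (y)^2 +
    (11732 + 0*s) * (p + s - 1) * (38626*y - 1320*x + 19589*q + 65536*p)^2 +
    (764800 + 0*s) * (p + s - 1) * (- 2392*y - 3911*x + 16384*q)^2 +
    (183168 + 0*s) * (p + s - 1) * (- 13785*y + 65536*x)^2 +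
    (747049431597056 + 0*s) * (p + s - 1) * (y)^2 +
    (48852 + 0*s) * (q + s - 1) * (- 15402*y - 6590*x + 4705*q + 65536*p)^2 +
    (45920 + 0*s) * (q + s - 1) * (1678*y + 20743*x + 32768*q)^2 +
    (728192 + 0*s) * (q + s - 1) * (- 6935*y + 32768*x)^2 +
    (751653636538368 + 0*s) * (q + s - 1) * (y)^2 +
    (258894 + 0*s) * (4*s + 4 - (s + 1)*(p + q) - p*q - 4*x - 4*y) * (- 89180*y - 70244*x + 29247*q + 65536*p)^2 +
    (829328 + 0*s) * (4*s + 4 - (s + 1)*(p + q) - p*q - 4*x - 4*y) * (- 19008*y - 36107*x + 32768*q)^2 +
    (2775040 + 0*s) * (4*s + 4 - (s + 1)*(p + q) - p*q - 4*x - 4*y) * (1455*y + 8192*x)^2 +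
    (180354266693632 + 0*s) * (4*s + 4 - (s + 1)*(p + q) - p*q - 4*x - 4*y) * (y)^2 +
    (25180 + 0*s) * (3*s + 3 - 2*x - 2*y) * (- 56532*y - 18910*x + 14679*q + 65536*p)^2 +
    (95664 + 0*s) * (3*s + 3 - 2*x - 2*y) * (- 3289*y - 27529*x + 32768*q)^2 +
    (10552320 + 0*s) * (3*s + 3 - 2*x - 2*y) * (- 3299*y + 8192*x)^2 +
    (593323962138624 + 0*s) * (3*s + 3 - 2*x - 2*y) * (y)^2 +
    (9616 + 0*s) * (p + s - 1)*x * (254560*y - 589338*x - 186917*q + 65536*p)^2 +
    (1797632 + 0*s) * (p + s - 1)*x * (- 11505*y + 24381*x + 16384*q)^2 +
    (1398848 + 0*s) * (p + s - 1)*x * (- 1097*y + 32768*x)^2 +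
    (639915767365632 + 0*s) * (p + s - 1)*x * (y)^2 +
    (153856 + 0*s) * (p + s - 1)*y * (33749*y + 18665*x + 3991*q + 16384*p)^2 +
    (1367552 + 0*s) * (p + s - 1)*y * (28531*y - 11431*x + 16384*q)^2 +
    (144480 + 0*s) * (p + s - 1)*y * (- 6469*y + 65536*x)^2 +
    (1750147633512448 + 0*s) * (p + s - 1)*y * (y)^2 +
    (344176 + 0*s) * (q + s - 1)*x * (- 21694*y + 58521*x + 892*q + 32768*p)^2 +
    (38208 + 0*s) * (q + s - 1)*x * (42899*y + 53598*x + 32768*q)^2 +
    (1635584 + 0*s) * (q + s - 1)*x * (- 1143*y + 32768*x)^2 +
    (618406571147264 + 0*s) * (q + s - 1)*x * (y)^2 +
    (762336 + 0*s) * (q + s - 1)*y * (71156*y - 31883*x - 4716*q + 32768*p)^2 +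
    (22672 + 0*s) * (q + s - 1)*y * (- 155594*y + 61651*x + 32768*q)^2 +
    (38244352 + 0*s) * (q + s - 1)*y * (- 321*y + 4096*x)^2 +
    (1498015873368064 + 0*s) * (q + s - 1)*y * (y)^2 +
    (908696 + 0*s) * (p + s - 1)*(q + s - 1) * (21339*y + 9928*x + 24896*q + 32768*p)^2 +
    (24586752 + 0*s) * (p + s - 1)*(q + s - 1) * (- 1858*y + 4079*x + 4096*q)^2 +
    (1112832 + 0*s) * (p + s - 1)*(q + s - 1) * (- 23533*y + 32768*x)^2 +
    (578583634378752 + 0*s) * (p + s - 1)*(q + s - 1) * (y)^2 +
    (1128528 + 0*s) * (3*s + 3 - 2*x - 2*y)*x * (- 31890*y + 25135*x - 3*q + 32768*p)^2 +
    (1636320 + 0*s) * (3*s + 3 - 2*x - 2*y)*x * (- 32429*y - 16172*x + 32768*q)^2 +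
    (4915392 + 0*s) * (3*s + 3 - 2*x - 2*y)*x * (503*y + 32768*x)^2 +
    (677848918523904 + 0*s) * (3*s + 3 - 2*x - 2*y)*x * (y)^2 +
    (1644704 + 0*s) * (3*s + 3 - 2*x - 2*y)*y * (- 16091*y - 32262*x - 2*q + 32768*p)^2 +
    (1136928 + 0*s) * (3*s + 3 - 2*x - 2*y)*y * (24948*y - 31657*x + 32768*q)^2 +
    (170528 + 0*s) * (3*s + 3 - 2*x - 2*y)*y * (7041*y + 65536*x)^2 +
    (5312908904890368 + 0*s) * (3*s + 3 - 2*x - 2*y)*y * (y)^2 +
    (2330624 + 0*s) * x*y * (32768 + 31612*y + 31612*x - 12659*q - 12659*p)^2 +
    (3292448 + 0*s) * x*y * (7204*y - 21436*x - 23183*q + 32768*p)^2 +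
    (1644416 + 0*s) * x*y * (- 32715*y - 15941*x + 32768*q)^2 +
    (6139264 + 0*s) * x*y * (- 13041*y + 32768*x)^2 +
    (5547998234804224 + 0*s) * x*y * (y)^2 +
    (572982997024768 + 0*s) * x*y*(p + s - 1) +
    (572982997024768 + 0*s) * x*y*(q + s - 1) +
    (515361715781632 + 0*s) * x*y*(4*s + 4 - (s + 1)*(p + q) - p*q - 4*x - 4*y) +
    (204062486167552 + 0*s) * x*x*(4*s + 4 - (s + 1)*(p + q) - p*q - 4*x - 4*y) +
    (204062486167552 + 0*s) * y*y*(4*s + 4 - (s + 1)*(p + q) - p*q - 4*x - 4*y) +
    (483922555174912 + 0*s) * x*y*(3*s + 3 - 2*x - 2*y) +
    (38626 + 0*s) * (p + s - 1)*(3*s + 3 - 2*x - 2*y) * (8882*y - 83818*x + 126349*q + 65536*p)^2 +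
    (194656 + 0*s) * (p + s - 1)*(3*s + 3 - 2*x - 2*y) * (1834*y - 35095*x + 32768*q)^2 +
    (154296 + 0*s) * (p + s - 1)*(3*s + 3 - 2*x - 2*y) * (- 44333*y + 65536*x)^2 +
    (310921272492032 + 0*s) * (p + s - 1)*(3*s + 3 - 2*x - 2*y) * (y)^2 +
    (768920 + 0*s) * (q + s - 1)*(3*s + 3 - 2*x - 2*y) * (- 25119*y + 2185*x + 12694*q + 32768*p)^2 +
    (39112 + 0*s) * (q + s - 1)*(3*s + 3 - 2*x - 2*y) * (25753*y + 905*x + 32768*q)^2 +
    (572000 + 0*s) * (q + s - 1)*(3*s + 3 - 2*x - 2*y) * (- 23917*y + 32768*x)^2 +
    (335488485425152 + 0*s) * (q + s - 1)*(3*s + 3 - 2*x - 2*y) * (y)^2 +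
    (4586 + 0*s) * (3*s + 3 - 2*x - 2*y)*(3*s + 3 - 2*x - 2*y) * (- 164612*y + 75626*x + 14533*q + 65536*p)^2 +
    (69760 + 0*s) * (3*s + 3 - 2*x - 2*y)*(3*s + 3 - 2*x - 2*y) * (29482*y - 47691*x + 16384*q)^2 +
    (89000 + 0*s) * (3*s + 3 - 2*x - 2*y)*(3*s + 3 - 2*x - 2*y) * (- 53933*y + 65536*x)^2 +
    (123385820479488 + 0*s) * (3*s + 3 - 2*x - 2*y)*(3*s + 3 - 2*x - 2*y) * (y)^2 +
    (4522497115794748 - 2020535360147684*s) * (p*q)^2 +
    (17930030572928 + 0*s) * (p*x)^2 +
    (17906639446792 + 0*s) * (p*y)^2 +
    (17898901413576 + 0*s) * (q*x)^2 +
    (17999515133112 + 0*s) * (q*y)^2 +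
    (71908745143904 + 0*s) * (x^2)^2 +
    (72298507348352 + 0*s) * (x*y)^2 +
    (71996772182208 + 0*s) * (y^2)^2 +
    (-85279674805731912 + 38146310675628032*s) * (p)^2 +
    (-85279679204573404 + 38146334540690428*s) * (q)^2 +
    (1283554698688168752 - 573988290291994928*s) * (x)^2 +
    (1283553127427497280 - 573990395136377344*s) * (y)^2 +
    (112905983891283456 - 50484980145389824*s) * x * (p)^2 +
    (115489947071023616 - 51640376578789584*s) * x * (q)^2 +
    (47879712952991264 - 21380405082800928*s) * x * (x)^2 +
    (22422017835429056 - 9995042257119808*s) * x * (y)^2 +
    (115489836573613936 - 51640503451516928*s) * y * (p)^2 +
    (112906071831482856 - 50485038992518056*s) * y * (q)^2 +
    (22421052165547776 - 9994754402358432*s) * y * (x)^2 +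
    (47880574739063072 - 21380507950238912*s) * y * (y)^2 +
    (1121854047649792 - 497692220325888*s) * (p + s - 1) * (p)^2 +
    (-14241465453078858 + 6372904247727210*s) * (p + s - 1) * (q)^2 +
    (226732101234581016 - 101382108576002728*s) * (p + s - 1) * (x)^2 +
    (362403729081867280 - 162056065783766864*s) * (p + s - 1) * (y)^2 +
    (-14241459460898816 + 6372946554126336*s) * (q + s - 1) * (p)^2 +
    (1121876653502476 - 497694423880224*s) * (q + s - 1) * (q)^2 +
    (362403374190310256 - 162055858607988768*s) * (q + s - 1) * (x)^2 +
    (226732406293108992 - 101381928319687360*s) * (q + s - 1) * (y)^2 +
    (4501125726208 + 0*s) * (4*s + 4 - (s + 1)*(p + q) - p*q - 4*x - 4*y) * (p)^2 +
    (4515622931378 + 0*s) * (4*s + 4 - (s + 1)*(p + q) - p*q - 4*x - 4*y) * (q)^2 +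
    (-120826486482764704 + 54043195528445952*s) * (4*s + 4 - (s + 1)*(p + q) - p*q - 4*x - 4*y) * (x)^2 +
    (-120826296339933016 + 54043195528445952*s) * (4*s + 4 - (s + 1)*(p + q) - p*q - 4*x - 4*y) * (y)^2 +
    (9019431321600 + 0*s) * (p + s - 1)*x * (p)^2 +
    (60431234154751044 - 27021597764222976*s) * (p + s - 1)*x * (q)^2 +
    (36521412013840 + 0*s) * (p + s - 1)*x * (x)^2 +
    (36278959651456 + 0*s) * (p + s - 1)*x * (y)^2 +
    (9019431321600 + 0*s) * (p + s - 1)*y * (p)^2 +
    (60431218655707508 - 27021597764222976*s) * (p + s - 1)*y * (q)^2 +
    (35590302611408 + 0*s) * (p + s - 1)*y * (x)^2 +
    (36058344066624 + 0*s) * (p + s - 1)*y * (y)^2 +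
    (60431172468473856 - 27021597764222976*s) * (q + s - 1)*x * (p)^2 +
    (9021929811904 + 0*s) * (q + s - 1)*x * (q)^2 +
    (36028285949040 + 0*s) * (q + s - 1)*x * (x)^2 +
    (35965280015648 + 0*s) * (q + s - 1)*x * (y)^2 +
    (60431139517497344 - 27021597764222976*s) * (q + s - 1)*y * (p)^2 +
    (9022578510016 + 0*s) * (q + s - 1)*y * (q)^2 +
    (36213750685392 + 0*s) * (q + s - 1)*y * (x)^2 +
    (36263448318336 + 0*s) * (q + s - 1)*y * (y)^2 +
    (9022056934144 + 0*s) * (3*s + 3 - 2*x - 2*y)*x * (p)^2 +
    (8947045352552 + 0*s) * (3*s + 3 - 2*x - 2*y)*x * (q)^2 +
    (35961136671824 + 0*s) * (3*s + 3 - 2*x - 2*y)*x * (x)^2 +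
    (36222599817152 + 0*s) * (3*s + 3 - 2*x - 2*y)*x * (y)^2 +
    (2712797507012396576 - 1213168907955413216*s) * x*y +
    (542278204028218512 - 242497914267533904*s) * x*y*(p + s - 1) +
    (542278315826323488 - 242498228565735520*s) * x*y*(q + s - 1) +
    (-241670344611268352 + 108086391056891904*s) * x*y*(4*s + 4 - (s + 1)*(p + q) - p*q - 4*x - 4*y) +
    (12851030857718441 - 5745126155624831*s) * (4*x + p*q)^2 +
    (12851038336366619 - 5745137366338973*s) * (4*y + p*q)^2 +
    (1546696042070880 - 683722945855488*s) * (q + p)^2 +
    (-1868673175444992 + 843711583092736*s) * (2*x + p)^2 +
    (1829297430944608 - 809940225359872*s) * (2*y + p)^2 +
    (1829215597596276 - 810015408016532*s) * (2*x + q)^2 +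
    (-1868607064191192 + 843741957273328*s) * (2*y + q)^2 +
    (59024 + 0*s) * (- 29028*y - 18928*x - 1125*q + 65536*p)^2 +
    (236032 + 0*s) * (- 9716*y - 14681*x + 32768*q)^2 +
    (4213248 + 0*s) * (- 1937*y + 16384*x)^2 +
    (1115179668471808 + 0*s) * (y)^2 = 0" by (subst id[symmetric]) (rule z)
    from sum4_zero[OF rest t146 t147 t148 t149 eq]
    have k1: "(59024 + 0*s) * (- 29028*y - 18928*x - 1125*q + 65536*p)^2 = 0" and k2: "(236032 + 0*s) * (- 9716*y - 14681*x + 32768*q)^2 = 0"
      and k3: "(4213248 + 0*s) * (- 1937*y + 16384*x)^2 = 0" and k4: "(1115179668471808 + 0*s) * (y)^2 = 0" by auto
    from k4 have y0: "y = 0" by simp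
    from k3 y0 have x0: "x = 0" by simp
    from k2 y0 x0 have q0: "q = 0" by simp
    from k1 y0 x0 q0 have p0: "p = 0" by simp
    show ?thesis using p0 q0 x0 y0 by simp
  qed
  have "0 \<le> 140737488355328 * Nf (p + s - 1) (q + s - 1) (x + 1) (y + 1) s"
    unfolding id by (intro add_nonneg_nonneg rest t146 t147 t148 t149)
  then have "0 \<le> Nf (p + s - 1) (q + s - 1) (x + 1) (y + 1) s" by simp
  with key show ?thesis by blast
qed

lemma s_bounds: "2236067/1000000 < sqrt (5::real)" "sqrt (5::real) < 2236068/1000000"
proof -
  show "2236067/1000000 < sqrt (5::real)" by (rule real_less_rsqrt) (simp add: power2_eq_square)
  show "sqrt (5::real) < 2236068/1000000" by (rule real_less_lsqrt) (simp_all add: power2_eq_square)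
qed

lemma tangent_bound:
  fixes u n A A' :: real
  assumes "0 < A" "0 < A'"
  shows "(2*n*u - n^2*A)/A' \<le> u^2/(A*A')"
proof -
  have eq: "(2*n*u - n^2*A)/A' = (2*n*u*A - n^2*A^2)/(A*A')"
    using assms by (simp add: field_simps power2_eq_square)
  have "0 \<le> (u - n*A)^2" by simp
  then have "2*n*u*A - n^2*A^2 \<le> u^2" by (simp add: power2_eq_square algebra_simps)
  then have "(2*n*u*A - n^2*A^2)/(A*A') \<le> u^2/(A*A')"
    using assms by (intro divide_right_mono) auto
  then show ?thesis using eq by simp
qed

lemma core_identity:
  fixes a b c d :: real
  assumes "0 < a" "0 < b" "1 \<le> c" "1 \<le> d"
  shows "d * (a + 1) * (c + d - 1) / (a + c + d) + c * (a + c - a * d) / (a + c) + a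
      + b * (a * b + a * d + b * c) / (b + d) + (1 + b) * (b + d - b * c) / (b + c + d)
    = (a + b + c + d + a*b) - 1 + (a + c - a*d)^2/((a+c)*(a+c+d)) + (b + d - b*c)^2/((b+d)*(b+c+d))"
proof -
  define P1 where "P1 = a + c + d"
  define P2 where "P2 = a + c"
  define P3 where "P3 = b + d"
  define P4 where "P4 = b + c + d"
  have nz: "P1 \<noteq> 0" "P2 \<noteq> 0" "P3 \<noteq> 0" "P4 \<noteq> 0"
    unfolding P1_def P2_def P3_def P4_def using assms by linarith+
  have "d * (a + 1) * (c + d - 1) / P1 + c * (a + c - a * d) / P2 + a
      + b * (a * b + a * d + b * c) / P3 + (1 + b) * (b + d - b * c) / P4
    = (a + b + c + d + a*b) - 1 + (a + c - a*d)^2/(P2*P1) + (b + d - b*c)^2/(P3*P4)"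
    apply (simp add: field_simps nz)
    apply (simp only: P1_def P2_def P3_def P4_def)
    by algebra
  then show ?thesis unfolding P1_def P2_def P3_def P4_def .
qed

lemma W_identity:
  fixes a b c d s :: real
  assumes "0 < a + c + d" "0 < b + c + d"
  shows "(7 - 3*s)/2 * (a + b + c + d + a*b) - 1
      + (2*((s-1)/2 + ((s-1)/2 - a + c - d)/8)*(a + c - a*d) - ((s-1)/2 + ((s-1)/2 - a + c - d)/8)^2*(a+c))/(a+c+d)
      + (2*((s-1)/2 + ((s-1)/2 - b + d - c)/8)*(b + d - b*c) - ((s-1)/2 + ((s-1)/2 - b + d - c)/8)^2*(b+d))/(b+c+d)
    = Nf (2*a) (2*b) c d s / (1024*(a+c+d)*(b+c+d))"
proof -
  define P1 where "P1 = a + c + d"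
  define P4 where "P4 = b + c + d"
  have nz: "P1 \<noteq> 0" "P4 \<noteq> 0" unfolding P1_def P4_def using assms by linarith+
  have "(7 - 3*s)/2 * (a + b + c + d + a*b) - 1
      + (2*((s-1)/2 + ((s-1)/2 - a + c - d)/8)*(a + c - a*d) - ((s-1)/2 + ((s-1)/2 - a + c - d)/8)^2*(a+c))/P1
      + (2*((s-1)/2 + ((s-1)/2 - b + d - c)/8)*(b + d - b*c) - ((s-1)/2 + ((s-1)/2 - b + d - c)/8)^2*(b+d))/P4
    = Nf (2*a) (2*b) c d s / (1024*P1*P4)"
    apply (simp add: field_simps nz)
    apply (simp only: P1_def P4_def Nf_def)
    by algebra
  then show ?thesis unfolding P1_def P4_def .
qed

theorem theorem4p1:
  fixes a b c d :: real
  assumes "a > 0" and "b > 0" and "c \<ge> 1" and "d \<ge> 1"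
    and "a - a * d + c > 0" and "b - b * c + d > 0"
  defines "E \<equiv> d * (a + 1) * (c + d - 1) / (a + c + d) + c * (a + c - a * d) / (a + c) + a
      + b * (a * b + a * d + b * c) / (b + d) + (1 + b) * (b + d - b * c) / (b + c + d)
      - (3 * sqrt 5 - 5) / 2 * (a + b + c + d + a * b)"
  shows "E \<ge> 0 \<and> (E = 0 \<longleftrightarrow> a = (sqrt 5 - 1) / 2 \<and> b = (sqrt 5 - 1) / 2 \<and> c = 1 \<and> d = 1)"
proof -
  note Edef = assms(7)
  define s where "s = sqrt 5"
  have s2: "s*s = 5" unfolding s_def by simp
  have sl: "2236067/1000000 < s" and su: "s < 2236068/1000000" using s_bounds unfolding s_def by auto
  define S where "S = a + b + c + d + a*b"
  define U where "U = (a + c - a*d)^2/((a+c)*(a+c+d))"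
  define V where "V = (b + d - b*c)^2/((b+d)*(b+c+d))"
  have pos: "0 < a + c" "0 < a + c + d" "0 < b + d" "0 < b + c + d" using assms(1-4) by linarith+
  have core: "d * (a + 1) * (c + d - 1) / (a + c + d) + c * (a + c - a * d) / (a + c) + a
      + b * (a * b + a * d + b * c) / (b + d) + (1 + b) * (b + d - b * c) / (b + c + d) = S - 1 + U + V"
    unfolding S_def U_def V_def by (rule core_identity[OF assms(1-4)])
  have "E = (d * (a + 1) * (c + d - 1) / (a + c + d) + c * (a + c - a * d) / (a + c) + a
      + b * (a * b + a * d + b * c) / (b + d) + (1 + b) * (b + d - b * c) / (b + c + d))
      - (3 * s - 5) / 2 * S" by (simp only: Edef s_def S_def)
  also have "\<dots> = (S - 1 + U + V) - (3 * s - 5) / 2 * S" by (simp only: core)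
  also have "\<dots> = (7 - 3*s)/2 * S - 1 + U + V" by (simp add: field_simps)
  finally have Eid: "E = (7 - 3*s)/2 * S - 1 + U + V" .
  have Upos: "0 < U" unfolding U_def using assms(5) pos by (intro divide_pos_pos) auto
  have Vpos: "0 < V" unfolding V_def using assms(6) pos by (intro divide_pos_pos) auto
  have tau_pos: "0 < (7 - 3*s)/2" using su by (simp add: field_simps)
  let ?pt = "a = (s - 1) / 2 \<and> b = (s - 1) / 2 \<and> c = 1 \<and> d = 1"
  have E_at_pt: "E = 0" if pt: ?pt
  proof -
    from pt have ha: "a = (s - 1)/2" and hb: "b = (s - 1)/2" and hc: "c = 1" and hd: "d = 1" by auto
    have tS0: "(7 - 3*s)/2 * S = 5 - 2*s + (s*s - 5)*(1 - 3*s)/8"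
      unfolding S_def ha hb hc hd by (simp add: field_simps)
    have tS: "(7 - 3*s)/2 * S = 5 - 2*s" using tS0 s2 by simp
    have d0: "(a + c)*(a + c + d) = s + 2 + (s*s - 5)/4"
      unfolding ha hc hd by (simp add: field_simps)
    have d1: "(a + c)*(a + c + d) = s + 2" using d0 s2 by simp
    have e0: "(b + d)*(b + c + d) = s + 2 + (s*s - 5)/4"
      unfolding hb hc hd by (simp add: field_simps)
    have e1: "(b + d)*(b + c + d) = s + 2" using e0 s2 by simp
    have u1: "a + c - a*d = 1" unfolding hc hd by simp
    have v1: "b + d - b*c = 1" unfolding hc hd by simp
    have UV: "U = 1/(s+2)" "V = 1/(s+2)" unfolding U_def V_def using u1 v1 d1 e1 by simp_all
    have sp: "s + 2 \<noteq> 0" using sl by linarith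
    have "(5 - 2*s) - 1 + 1/(s+2) + 1/(s+2) = (10 - 2*(s*s))/(s+2)"
      using sp by (simp add: field_simps)
    also have "\<dots> = 0" using s2 by simp
    finally have X: "(5 - 2*s) - 1 + 1/(s+2) + 1/(s+2) = 0" .
    have "E = (5 - 2*s) - 1 + 1/(s+2) + 1/(s+2)" unfolding Eid tS UV by (rule refl)
    then show ?thesis using X by simp
  qed
  show ?thesis
  proof (cases "(7 - 3*s)/2 * S < 1")
    case False
    then have Egt: "E > 0" using Eid Upos Vpos by linarith
    have npt: "\<not> ?pt" using E_at_pt Egt by force
    show ?thesis unfolding s_def[symmetric] using Egt npt by auto
  next
    case True
    have prod1: "(7 - 3*s)/2 * ((7 + 3*s)/2) = 1 + (5 - s*s)*9/4"
      by (simp add: field_simps)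
    have prod: "(7 - 3*s)/2 * ((7 + 3*s)/2) = 1" using prod1 s2 by simp
    have Sb: "S < (7 + 3*s)/2"
    proof (rule ccontr)
      assume h: "\<not> S < (7 + 3*s)/2"
      then have "(7 - 3*s)/2 * ((7 + 3*s)/2) \<le> (7 - 3*s)/2 * S"
        using tau_pos by (intro mult_left_mono) auto
      then show False using prod True by linarith
    qed
    define n1 where "n1 = (s-1)/2 + ((s-1)/2 - a + c - d)/8"
    define n2 where "n2 = (s-1)/2 + ((s-1)/2 - b + d - c)/8"
    have b1: "(2*n1*(a + c - a*d) - n1^2*(a+c))/(a+c+d) \<le> U"
      unfolding U_def using tangent_bound[where n=n1 and u="a + c - a*d" and A="a+c" and A'="a+c+d"] pos by simp
    have b2: "(2*n2*(b + d - b*c) - n2^2*(b+d))/(b+c+d) \<le> V"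
      unfolding V_def using tangent_bound[where n=n2 and u="b + d - b*c" and A="b+d" and A'="b+c+d"] pos by simp
    have Wid: "(7 - 3*s)/2 * S - 1 + (2*n1*(a + c - a*d) - n1^2*(a+c))/(a+c+d)
        + (2*n2*(b + d - b*c) - n2^2*(b+d))/(b+c+d) = Nf (2*a) (2*b) c d s / (1024*(a+c+d)*(b+c+d))"
      unfolding S_def n1_def n2_def using W_identity[OF pos(2) pos(4)] by simp
    have EW: "Nf (2*a) (2*b) c d s / (1024*(a+c+d)*(b+c+d)) \<le> E"
      using Eid b1 b2 Wid by linarith
    have abpos: "0 \<le> a*b" using assms(1,2) by simp
    have R0: "4*s + 4 - (s + 1)*((2*a - s + 1) + (2*b - s + 1)) - (2*a - s + 1)*(2*b - s + 1) - 4*(c - 1) - 4*(d - 1)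
        = (s*s + 6*s + 9) - 4*S" unfolding S_def by algebra
    have hR: "0 \<le> 4*s + 4 - (s + 1)*((2*a - s + 1) + (2*b - s + 1)) - (2*a - s + 1)*(2*b - s + 1) - 4*(c - 1) - 4*(d - 1)"
      using R0 s2 Sb by simp
    have Sb2: "2*S < 7 + 3*s" using Sb by (simp add: field_simps)
    have hT: "0 \<le> 3*s + 3 - 2*(c - 1) - 2*(d - 1)" using Sb2 abpos assms(1,2) unfolding S_def by smt
    have CM: "0 \<le> Nf (2*a - s + 1 + s - 1) (2*b - s + 1 + s - 1) (c - 1 + 1) (d - 1 + 1) s \<and>
      (Nf (2*a - s + 1 + s - 1) (2*b - s + 1 + s - 1) (c - 1 + 1) (d - 1 + 1) s = 0 \<longrightarrow>
        2*a - s + 1 = 0 \<and> 2*b - s + 1 = 0 \<and> c - 1 = 0 \<and> d - 1 = 0)"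
      by (rule cert_main[where p="2*a - s + 1" and q="2*b - s + 1" and x="c - 1" and y="d - 1" and s=s])
         (use s2 sl su hR hT assms(1-4) in auto)
    have CM2: "0 \<le> Nf (2*a) (2*b) c d s \<and> (Nf (2*a) (2*b) c d s = 0 \<longrightarrow> ?pt)"
      using CM by (auto simp: field_simps)
    have dpos: "0 < 1024*(a+c+d)*(b+c+d)" using pos by simp
    have Wnn: "0 \<le> Nf (2*a) (2*b) c d s / (1024*(a+c+d)*(b+c+d))" using CM2 dpos by simp
    have E0: "E \<ge> 0" using EW Wnn by linarith
    have E1: "E = 0 \<Longrightarrow> ?pt"
    proof -
      assume "E = 0"
      then have hz: "Nf (2*a) (2*b) c d s / (1024*(a+c+d)*(b+c+d)) = 0" using EW Wnn by linarith
      have dne: "1024*(a+c+d)*(b+c+d) \<noteq> 0" using dpos by linarith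
      from hz have "Nf (2*a) (2*b) c d s = 0 \<or> 1024*(a+c+d)*(b+c+d) = 0" unfolding divide_eq_0_iff .
      with dne have "Nf (2*a) (2*b) c d s = 0" by blast
      then show ?pt using CM2 by blast
    qed
    show ?thesis unfolding s_def[symmetric] using E0 E1 E_at_pt by blast
  qed
qed

end
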